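(* Let $\mathcal{A}=(A_1,A_2,B,\pi_1,\pi_2)$ be a finite primitive amalgam of degree $(5,2)$ with $A_1\cong\mathrm{Frob}(20)\times C_2$, $B\cong C_4\times C_2$, and $A_2\cong\mathrm{N}_{16}$ or $A_2\cong\mathrm{M}_{16}$. Then every amalgam of the same type as $\mathcal{A}$ is isomorphic to $\mathcal{A}$.
   Context: An amalgam is a 5-tuple $(A_1,A_2,B,\pi_1,\pi_2)$ with monomorphisms $\pi_i:B\to A_i$; degree $(5,2)$ means $|A_1:\pi_1(B)|=5$, $|A_2:\pi_2(B)|=2$; primitive means no nontrivial $K\le B$ has $\pi_i(K)\trianglelefteq A_i$ for both $i$. Two amalgams $(A_1,A_2,B,\pi_1,\pi_2)$, $(C_1,C_2,D,\rho_1,\rho_2)$ have the same type if there are isomorphisms $\alpha:A_1\to C_1,\beta:A_2\to C_2,\gamma:B\to D$ with $\alpha(\pi_1(B))=\rho_1(D)$, $\beta(\pi_2(B))=\rho_2(D)$; they are isomorphic if these can be chosen with $\alpha\pi_1=\rho_1\gamma$, $\beta\pi_2=\rho_2\gamma$. $\mathrm{Frob}(20)$ is the Frobenius group of order 20; $\mathrm{M}_{16}=\langle u,v\mid u^8=v^2=1,u^v=u^5\rangle$; $\mathrm{N}_{16}=\langle (1,2,3,4)(5,6,7,8),(5,7)(6,8),(1,5)(2,6)(3,7)(4,8)\rangle\le S_8$. *)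

theory Defs
  imports "HOL-Algebra.Algebra" "HOL-Combinatorics.Cycles"
begin

definition monomorphism :: "('b, 'x) monoid_scheme \<Rightarrow> ('a, 'y) monoid_scheme \<Rightarrow> ('b \<Rightarrow> 'a) \<Rightarrow> bool"
  where "monomorphism B A \<pi> \<longleftrightarrow> \<pi> \<in> hom B A \<and> inj_on \<pi> (carrier B)"

definition amalgam ::
  "('a1, 'x1) monoid_scheme \<Rightarrow> ('a2, 'x2) monoid_scheme \<Rightarrow> ('b, 'x3) monoid_scheme
   \<Rightarrow> ('b \<Rightarrow> 'a1) \<Rightarrow> ('b \<Rightarrow> 'a2) \<Rightarrow> bool" where
  "amalgam A1 A2 B \<pi>1 \<pi>2 \<longleftrightarrow> group A1 \<and> group A2 \<and> group B \<and>
     monomorphism B A1 \<pi>1 \<and> monomorphism B A2 \<pi>2"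

definition finite_amalgam ::
  "('a1, 'x1) monoid_scheme \<Rightarrow> ('a2, 'x2) monoid_scheme \<Rightarrow> ('b, 'x3) monoid_scheme
   \<Rightarrow> ('b \<Rightarrow> 'a1) \<Rightarrow> ('b \<Rightarrow> 'a2) \<Rightarrow> bool" where
  "finite_amalgam A1 A2 B \<pi>1 \<pi>2 \<longleftrightarrow> amalgam A1 A2 B \<pi>1 \<pi>2 \<and>
     finite (carrier A1) \<and> finite (carrier A2) \<and> finite (carrier B)"

definition amalgam_degree ::
  "('a1, 'x1) monoid_scheme \<Rightarrow> ('a2, 'x2) monoid_scheme \<Rightarrow> ('b, 'x3) monoid_scheme
   \<Rightarrow> ('b \<Rightarrow> 'a1) \<Rightarrow> ('b \<Rightarrow> 'a2) \<Rightarrow> nat \<Rightarrow> nat \<Rightarrow> bool" where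
  "amalgam_degree A1 A2 B \<pi>1 \<pi>2 m n \<longleftrightarrow>
     card (rcosets\<^bsub>A1\<^esub> (\<pi>1 ` carrier B)) = m \<and>
     card (rcosets\<^bsub>A2\<^esub> (\<pi>2 ` carrier B)) = n"

definition primitive_amalgam ::
  "('a1, 'x1) monoid_scheme \<Rightarrow> ('a2, 'x2) monoid_scheme \<Rightarrow> ('b, 'x3) monoid_scheme
   \<Rightarrow> ('b \<Rightarrow> 'a1) \<Rightarrow> ('b \<Rightarrow> 'a2) \<Rightarrow> bool" where
  "primitive_amalgam A1 A2 B \<pi>1 \<pi>2 \<longleftrightarrow>
     (\<forall>K. subgroup K B \<and> normal (\<pi>1 ` K) A1 \<and> normal (\<pi>2 ` K) A2 \<longrightarrow> K = {\<one>\<^bsub>B\<^esub>})"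

definition same_type ::
  "('a1, 'x1) monoid_scheme \<Rightarrow> ('a2, 'x2) monoid_scheme \<Rightarrow> ('b, 'x3) monoid_scheme
   \<Rightarrow> ('b \<Rightarrow> 'a1) \<Rightarrow> ('b \<Rightarrow> 'a2)
   \<Rightarrow> ('c1, 'y1) monoid_scheme \<Rightarrow> ('c2, 'y2) monoid_scheme \<Rightarrow> ('d, 'y3) monoid_scheme
   \<Rightarrow> ('d \<Rightarrow> 'c1) \<Rightarrow> ('d \<Rightarrow> 'c2) \<Rightarrow> bool" where
  "same_type A1 A2 B \<pi>1 \<pi>2 C1 C2 D \<rho>1 \<rho>2 \<longleftrightarrow>
     (\<exists>\<alpha> \<beta> \<gamma>. \<alpha> \<in> iso A1 C1 \<and> \<beta> \<in> iso A2 C2 \<and> \<gamma> \<in> iso B D \<and>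
        \<alpha> ` (\<pi>1 ` carrier B) = \<rho>1 ` carrier D \<and>
        \<beta> ` (\<pi>2 ` carrier B) = \<rho>2 ` carrier D)"

definition isomorphic_amalgams ::
  "('a1, 'x1) monoid_scheme \<Rightarrow> ('a2, 'x2) monoid_scheme \<Rightarrow> ('b, 'x3) monoid_scheme
   \<Rightarrow> ('b \<Rightarrow> 'a1) \<Rightarrow> ('b \<Rightarrow> 'a2)
   \<Rightarrow> ('c1, 'y1) monoid_scheme \<Rightarrow> ('c2, 'y2) monoid_scheme \<Rightarrow> ('d, 'y3) monoid_scheme
   \<Rightarrow> ('d \<Rightarrow> 'c1) \<Rightarrow> ('d \<Rightarrow> 'c2) \<Rightarrow> bool" where
  "isomorphic_amalgams A1 A2 B \<pi>1 \<pi>2 C1 C2 D \<rho>1 \<rho>2 \<longleftrightarrow>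
     (\<exists>\<alpha> \<beta> \<gamma>. \<alpha> \<in> iso A1 C1 \<and> \<beta> \<in> iso A2 C2 \<and> \<gamma> \<in> iso B D \<and>
        (\<forall>b\<in>carrier B. \<alpha> (\<pi>1 b) = \<rho>1 (\<gamma> b)) \<and>
        (\<forall>b\<in>carrier B. \<beta> (\<pi>2 b) = \<rho>2 (\<gamma> b)))"

abbreviation C :: "nat \<Rightarrow> int monoid" where "C n \<equiv> integer_mod_group n"

text \<open>Frobenius group of order 20, realised as AGL(1,5): (a,b) is x \<mapsto> a x + b over Z/5.\<close>
definition Frob20 :: "(int \<times> int) monoid" where
  "Frob20 = \<lparr> carrier = {1..4} \<times> {0..4},
              monoid.mult = (\<lambda>x y. ((fst x * fst y) mod 5, (fst x * snd y + snd x) mod 5)),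
              one = (1,0) \<rparr>"

text \<open>M16 = <u,v | u^8 = v^2 = 1, u^v = u^5>, realised on normal forms u^i v^j.\<close>
definition M16 :: "(int \<times> int) monoid" where
  "M16 = \<lparr> carrier = {0..7} \<times> {0..1},
           monoid.mult = (\<lambda>x y. ((fst x + (if snd x = 0 then fst y else 5 * fst y)) mod 8, (snd x + snd y) mod 2)),
           one = (0,0) \<rparr>"

definition N16 :: "(nat \<Rightarrow> nat) monoid" where
  "N16 = (sym_group 8) \<lparr> carrier := generate (sym_group 8)
      { cycle_of_list [1,2,3,4] \<circ> cycle_of_list [5,6,7,8],
        cycle_of_list [5,7] \<circ> cycle_of_list [6,8],
        cycle_of_list [1,5] \<circ> cycle_of_list [2,6] \<circ> cycle_of_list [3,7] \<circ> cycle_of_list [4,8] } \<rparr>"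

end

theory Submission
  imports Defs
begin


abbreviation "B0 \<equiv> C 4 \<times>\<times> C 2"

lemma B0_carrier: "carrier B0 = {(0,0),(0,1),(1,0),(1,1),(2,0),(2,1),(3,0),(3,1)}"
  by (auto simp: carrier_integer_mod_group)

lemma B0_1: "\<forall>x\<in>carrier B0. x \<otimes>\<^bsub>B0\<^esub> x \<otimes>\<^bsub>B0\<^esub> x \<otimes>\<^bsub>B0\<^esub> x = \<one>\<^bsub>B0\<^esub>"
  unfolding B0_carrier by simp
lemma B0_2: "\<forall>x\<in>carrier B0. \<forall>y\<in>carrier B0. x \<otimes>\<^bsub>B0\<^esub> y = y \<otimes>\<^bsub>B0\<^esub> x"
  unfolding B0_carrier by simp
lemma B0_3: "\<forall>x\<in>carrier B0. \<forall>y\<in>carrier B0. x \<otimes>\<^bsub>B0\<^esub> x \<noteq> \<one>\<^bsub>B0\<^esub> \<longrightarrow> y \<otimes>\<^bsub>B0\<^esub> y \<noteq> \<one>\<^bsub>B0\<^esub> \<longrightarrow> x \<otimes>\<^bsub>B0\<^esub> x = y \<otimes>\<^bsub>B0\<^esub> y"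
  unfolding B0_carrier by simp
lemma B0_5: "\<exists>x\<in>carrier B0. x \<otimes>\<^bsub>B0\<^esub> x \<noteq> \<one>\<^bsub>B0\<^esub>"
  unfolding B0_carrier by simp
lemma B0_card: "card (carrier B0) = 8"
  unfolding B0_carrier by simp

lemma B0_4:
  "\<forall>t\<in>carrier B0. \<forall>z\<in>carrier B0. \<forall>x\<in>carrier B0.
    t \<otimes>\<^bsub>B0\<^esub> t \<noteq> \<one>\<^bsub>B0\<^esub> \<longrightarrow> z \<otimes>\<^bsub>B0\<^esub> z = \<one>\<^bsub>B0\<^esub>
    \<longrightarrow> z \<noteq> \<one>\<^bsub>B0\<^esub> \<longrightarrow> z \<noteq> t \<otimes>\<^bsub>B0\<^esub> t \<longrightarrow>
    x = \<one>\<^bsub>B0\<^esub> \<or> x = t \<or> x = t \<otimes>\<^bsub>B0\<^esub> t \<or> x = t \<otimes>\<^bsub>B0\<^esub> t \<otimes>\<^bsub>B0\<^esub> t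
    \<or> x = z \<or> x = t \<otimes>\<^bsub>B0\<^esub> z \<or> x = t \<otimes>\<^bsub>B0\<^esub> t \<otimes>\<^bsub>B0\<^esub> z
    \<or> x = t \<otimes>\<^bsub>B0\<^esub> t \<otimes>\<^bsub>B0\<^esub> t \<otimes>\<^bsub>B0\<^esub> z"
  unfolding B0_carrier by simp

lemma B_structure:
  fixes B :: "('b, 'x) monoid_scheme"
  assumes grp: "group B" and iso: "B \<cong> B0"
  shows "\<forall>x\<in>carrier B. x \<otimes>\<^bsub>B\<^esub> x \<otimes>\<^bsub>B\<^esub> x \<otimes>\<^bsub>B\<^esub> x = \<one>\<^bsub>B\<^esub>"
    and "\<forall>x\<in>carrier B. \<forall>y\<in>carrier B. x \<otimes>\<^bsub>B\<^esub> y = y \<otimes>\<^bsub>B\<^esub> x"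
    and "\<forall>x\<in>carrier B. \<forall>y\<in>carrier B. x \<otimes>\<^bsub>B\<^esub> x \<noteq> \<one>\<^bsub>B\<^esub> \<longrightarrow> y \<otimes>\<^bsub>B\<^esub> y \<noteq> \<one>\<^bsub>B\<^esub> \<longrightarrow> x \<otimes>\<^bsub>B\<^esub> x = y \<otimes>\<^bsub>B\<^esub> y"
    and "\<exists>x\<in>carrier B. x \<otimes>\<^bsub>B\<^esub> x \<noteq> \<one>\<^bsub>B\<^esub>"
    and "card (carrier B) = 8"
    and "\<forall>t\<in>carrier B. \<forall>z\<in>carrier B. \<forall>x\<in>carrier B.
    t \<otimes>\<^bsub>B\<^esub> t \<noteq> \<one>\<^bsub>B\<^esub> \<longrightarrow> z \<otimes>\<^bsub>B\<^esub> z = \<one>\<^bsub>B\<^esub>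
    \<longrightarrow> z \<noteq> \<one>\<^bsub>B\<^esub> \<longrightarrow> z \<noteq> t \<otimes>\<^bsub>B\<^esub> t \<longrightarrow>
    x = \<one>\<^bsub>B\<^esub> \<or> x = t \<or> x = t \<otimes>\<^bsub>B\<^esub> t \<or> x = t \<otimes>\<^bsub>B\<^esub> t \<otimes>\<^bsub>B\<^esub> t
    \<or> x = z \<or> x = t \<otimes>\<^bsub>B\<^esub> z \<or> x = t \<otimes>\<^bsub>B\<^esub> t \<otimes>\<^bsub>B\<^esub> z
    \<or> x = t \<otimes>\<^bsub>B\<^esub> t \<otimes>\<^bsub>B\<^esub> t \<otimes>\<^bsub>B\<^esub> z"
proof -
  interpret B: group B by (rule grp)
  obtain h where h: "h \<in> iso B B0" using iso unfolding is_iso_def by blast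
  have hh: "h \<in> hom B B0" using h by (simp add: iso_iff)
  have g0: "group B0" by (simp add: DirProd_group)
  have hm: "\<And>x y. x \<in> carrier B \<Longrightarrow> y \<in> carrier B \<Longrightarrow> h (x \<otimes>\<^bsub>B\<^esub> y) = h x \<otimes>\<^bsub>B0\<^esub> h y"
    using hh by (rule hom_mult)
  have h1: "h \<one>\<^bsub>B\<^esub> = \<one>\<^bsub>B0\<^esub>" using hom_one[OF hh grp g0] .
  have hc: "\<And>x. x \<in> carrier B \<Longrightarrow> h x \<in> carrier B0" using hh by (auto simp: hom_def)
  have inj: "inj_on h (carrier B)" using h by (simp add: iso_iff)
  have surj: "h ` carrier B = carrier B0" using h by (simp add: iso_iff)
  have eq: "\<And>x y. x \<in> carrier B \<Longrightarrow> y \<in> carrier B \<Longrightarrow> h x = h y \<longleftrightarrow> x = y"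
    using inj by (meson inj_on_eq_iff)
  show "\<forall>x\<in>carrier B. x \<otimes>\<^bsub>B\<^esub> x \<otimes>\<^bsub>B\<^esub> x \<otimes>\<^bsub>B\<^esub> x = \<one>\<^bsub>B\<^esub>"
  proof
    fix x assume x: "x \<in> carrier B"
    have i: "h x \<otimes>\<^bsub>B0\<^esub> h x \<otimes>\<^bsub>B0\<^esub> h x \<otimes>\<^bsub>B0\<^esub> h x = \<one>\<^bsub>B0\<^esub>" using B0_1 hc[OF x] by blast
    have "h (x \<otimes>\<^bsub>B\<^esub> x \<otimes>\<^bsub>B\<^esub> x \<otimes>\<^bsub>B\<^esub> x) = h \<one>\<^bsub>B\<^esub>"
      using i x by (simp add: hm h1)
    thus "x \<otimes>\<^bsub>B\<^esub> x \<otimes>\<^bsub>B\<^esub> x \<otimes>\<^bsub>B\<^esub> x = \<one>\<^bsub>B\<^esub>" using x by (simp add: eq)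
  qed
  show "\<forall>x\<in>carrier B. \<forall>y\<in>carrier B. x \<otimes>\<^bsub>B\<^esub> y = y \<otimes>\<^bsub>B\<^esub> x"
  proof (intro ballI)
    fix x y assume x: "x \<in> carrier B" and y: "y \<in> carrier B"
    have i: "h x \<otimes>\<^bsub>B0\<^esub> h y = h y \<otimes>\<^bsub>B0\<^esub> h x" using B0_2 hc[OF x] hc[OF y] by blast
    have "h (x \<otimes>\<^bsub>B\<^esub> y) = h (y \<otimes>\<^bsub>B\<^esub> x)"
      using i x y by (simp add: hm)
    thus "x \<otimes>\<^bsub>B\<^esub> y = y \<otimes>\<^bsub>B\<^esub> x" using x y by (simp add: eq)
  qed
  show "\<forall>x\<in>carrier B. \<forall>y\<in>carrier B. x \<otimes>\<^bsub>B\<^esub> x \<noteq> \<one>\<^bsub>B\<^esub> \<longrightarrow> y \<otimes>\<^bsub>B\<^esub> y \<noteq> \<one>\<^bsub>B\<^esub> \<longrightarrow> x \<otimes>\<^bsub>B\<^esub> x = y \<otimes>\<^bsub>B\<^esub> y"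
  proof (intro ballI impI)
    fix x y assume x: "x \<in> carrier B" and y: "y \<in> carrier B" and a: "x \<otimes>\<^bsub>B\<^esub> x \<noteq> \<one>\<^bsub>B\<^esub>" "y \<otimes>\<^bsub>B\<^esub> y \<noteq> \<one>\<^bsub>B\<^esub>"
    have "h (x \<otimes>\<^bsub>B\<^esub> x) \<noteq> h \<one>\<^bsub>B\<^esub>" "h (y \<otimes>\<^bsub>B\<^esub> y) \<noteq> h \<one>\<^bsub>B\<^esub>" using a x y by (simp_all add: eq)
    hence "h x \<otimes>\<^bsub>B0\<^esub> h x \<noteq> \<one>\<^bsub>B0\<^esub>" "h y \<otimes>\<^bsub>B0\<^esub> h y \<noteq> \<one>\<^bsub>B0\<^esub>" using x y by (simp_all add: hm h1)
    hence "h x \<otimes>\<^bsub>B0\<^esub> h x = h y \<otimes>\<^bsub>B0\<^esub> h y" using B0_3 hc[OF x] hc[OF y] by blast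
    hence "h (x \<otimes>\<^bsub>B\<^esub> x) = h (y \<otimes>\<^bsub>B\<^esub> y)"
      using x y by (simp add: hm)
    thus "x \<otimes>\<^bsub>B\<^esub> x = y \<otimes>\<^bsub>B\<^esub> y" using x y by (simp add: eq)
  qed
  show "\<exists>x\<in>carrier B. x \<otimes>\<^bsub>B\<^esub> x \<noteq> \<one>\<^bsub>B\<^esub>"
  proof -
    obtain y where y: "y \<in> carrier B0" "y \<otimes>\<^bsub>B0\<^esub> y \<noteq> \<one>\<^bsub>B0\<^esub>" using B0_5 by blast
    then obtain x where x: "x \<in> carrier B" "y = h x" using surj by blast
    have "h (x \<otimes>\<^bsub>B\<^esub> x) \<noteq> h \<one>\<^bsub>B\<^esub>" using y x by (simp add: hm h1)
    thus ?thesis using x by (intro bexI[of _ x]) auto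
  qed
  show "card (carrier B) = 8"
    using iso_same_card[OF iso] B0_card by simp
  show "\<forall>t\<in>carrier B. \<forall>z\<in>carrier B. \<forall>x\<in>carrier B.
    t \<otimes>\<^bsub>B\<^esub> t \<noteq> \<one>\<^bsub>B\<^esub> \<longrightarrow> z \<otimes>\<^bsub>B\<^esub> z = \<one>\<^bsub>B\<^esub>
    \<longrightarrow> z \<noteq> \<one>\<^bsub>B\<^esub> \<longrightarrow> z \<noteq> t \<otimes>\<^bsub>B\<^esub> t \<longrightarrow>
    x = \<one>\<^bsub>B\<^esub> \<or> x = t \<or> x = t \<otimes>\<^bsub>B\<^esub> t \<or> x = t \<otimes>\<^bsub>B\<^esub> t \<otimes>\<^bsub>B\<^esub> t
    \<or> x = z \<or> x = t \<otimes>\<^bsub>B\<^esub> z \<or> x = t \<otimes>\<^bsub>B\<^esub> t \<otimes>\<^bsub>B\<^esub> z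
    \<or> x = t \<otimes>\<^bsub>B\<^esub> t \<otimes>\<^bsub>B\<^esub> t \<otimes>\<^bsub>B\<^esub> z"
  proof (intro ballI impI)
    fix t z x assume t: "t \<in> carrier B" and z: "z \<in> carrier B" and x: "x \<in> carrier B"
      and a: "t \<otimes>\<^bsub>B\<^esub> t \<noteq> \<one>\<^bsub>B\<^esub>" "z \<otimes>\<^bsub>B\<^esub> z = \<one>\<^bsub>B\<^esub>" "z \<noteq> \<one>\<^bsub>B\<^esub>" "z \<noteq> t \<otimes>\<^bsub>B\<^esub> t"
    have a': "h (t \<otimes>\<^bsub>B\<^esub> t) \<noteq> h \<one>\<^bsub>B\<^esub>" "h (z \<otimes>\<^bsub>B\<^esub> z) = h \<one>\<^bsub>B\<^esub>" "h z \<noteq> h \<one>\<^bsub>B\<^esub>" "h z \<noteq> h (t \<otimes>\<^bsub>B\<^esub> t)"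
      using a t z by (simp_all add: eq)
    hence a'': "h t \<otimes>\<^bsub>B0\<^esub> h t \<noteq> \<one>\<^bsub>B0\<^esub>" "h z \<otimes>\<^bsub>B0\<^esub> h z = \<one>\<^bsub>B0\<^esub>" "h z \<noteq> \<one>\<^bsub>B0\<^esub>" "h z \<noteq> h t \<otimes>\<^bsub>B0\<^esub> h t"
      using t z by (simp_all add: hm h1)
    have i: "h x = \<one>\<^bsub>B0\<^esub> \<or> h x = h t \<or> h x = h t \<otimes>\<^bsub>B0\<^esub> h t \<or> h x = h t \<otimes>\<^bsub>B0\<^esub> h t \<otimes>\<^bsub>B0\<^esub> h t
    \<or> h x = h z \<or> h x = h t \<otimes>\<^bsub>B0\<^esub> h z \<or> h x = h t \<otimes>\<^bsub>B0\<^esub> h t \<otimes>\<^bsub>B0\<^esub> h z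
    \<or> h x = h t \<otimes>\<^bsub>B0\<^esub> h t \<otimes>\<^bsub>B0\<^esub> h t \<otimes>\<^bsub>B0\<^esub> h z"
      using B0_4 hc[OF x] hc[OF t] hc[OF z] a'' by blast
    have "h x = h \<one>\<^bsub>B\<^esub> \<or> h x = h t \<or> h x = h (t \<otimes>\<^bsub>B\<^esub> t) \<or> h x = h (t \<otimes>\<^bsub>B\<^esub> t \<otimes>\<^bsub>B\<^esub> t)
    \<or> h x = h z \<or> h x = h (t \<otimes>\<^bsub>B\<^esub> z) \<or> h x = h (t \<otimes>\<^bsub>B\<^esub> t \<otimes>\<^bsub>B\<^esub> z)
    \<or> h x = h (t \<otimes>\<^bsub>B\<^esub> t \<otimes>\<^bsub>B\<^esub> t \<otimes>\<^bsub>B\<^esub> z)"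
      using i t z by (simp add: hm h1)
    thus "x = \<one>\<^bsub>B\<^esub> \<or> x = t \<or> x = t \<otimes>\<^bsub>B\<^esub> t \<or> x = t \<otimes>\<^bsub>B\<^esub> t \<otimes>\<^bsub>B\<^esub> t
    \<or> x = z \<or> x = t \<otimes>\<^bsub>B\<^esub> z \<or> x = t \<otimes>\<^bsub>B\<^esub> t \<otimes>\<^bsub>B\<^esub> z
    \<or> x = t \<otimes>\<^bsub>B\<^esub> t \<otimes>\<^bsub>B\<^esub> t \<otimes>\<^bsub>B\<^esub> z" using x t z by (simp add: eq)
  qed
qed


abbreviation "G1 \<equiv> Frob20 \<times>\<times> C 2"
definition phi :: "(int \<times> int) \<times> int \<Rightarrow> bool" where
  "phi x \<longleftrightarrow> fst (fst x) = 2 \<or> fst (fst x) = 3"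
abbreviation "zc0 \<equiv> (((1::int),(0::int)),(1::int))"
definition m1 :: "(int \<times> int) \<times> int \<Rightarrow> (int \<times> int) \<times> int \<Rightarrow> (int \<times> int) \<times> int" where
  "m1 x y = (((fst (fst x) * fst (fst y)) mod 5, (fst (fst x) * snd (fst y) + snd (fst x)) mod 5), ((snd x + snd y) mod (2::int)))"

lemma i4: "{1..4::int} = {1,2,3,4}" by code_simp
lemma i5: "{0..4::int} = {0,1,2,3,4}" by code_simp
lemma i2: "{0..<2::int} = {0,1}" by code_simp

lemma G1_carrier: "carrier G1 = ({1,2,3,4} \<times> {0,1,2,3,4}) \<times> {0,1}"
  by (simp add: carrier_integer_mod_group Frob20_def i4 i5 i2)

lemma G1_mult: "x \<otimes>\<^bsub>G1\<^esub> y = m1 x y"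
  by (simp add: mult_DirProd' Frob20_def m1_def)

lemma G1_D1: "\<forall>x\<in>carrier G1. x \<otimes>\<^bsub>G1\<^esub> x \<noteq> zc0"
proof -
  have "\<forall>x\<in>({1,2,3,4} \<times> {0,1,2,3,4}) \<times> {0,1}. m1 x x \<noteq> zc0" by code_simp
  thus ?thesis unfolding G1_carrier G1_mult .
qed

lemma G1_D2: "\<forall>x\<in>carrier G1. \<forall>y\<in>carrier G1. phi (x \<otimes>\<^bsub>G1\<^esub> y) = (phi x \<noteq> phi y)"
proof -
  have "\<forall>x\<in>({1,2,3,4} \<times> {0,1,2,3,4}) \<times> {0,1}. \<forall>y\<in>({1,2,3,4} \<times> {0,1,2,3,4}) \<times> {0,1}. phi (m1 x y) = (phi x \<noteq> phi y)" by code_simp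
  thus ?thesis unfolding G1_carrier G1_mult .
qed

lemma G1_D3: "\<forall>x\<in>carrier G1. x \<otimes>\<^bsub>G1\<^esub> x \<otimes>\<^bsub>G1\<^esub> x \<otimes>\<^bsub>G1\<^esub> x \<otimes>\<^bsub>G1\<^esub> x = x \<longrightarrow> x \<otimes>\<^bsub>G1\<^esub> x \<otimes>\<^bsub>G1\<^esub> x \<noteq> x \<longrightarrow> phi x"
proof -
  have "\<forall>x\<in>({1,2,3,4} \<times> {0,1,2,3,4}) \<times> {0,1}. m1 (m1 (m1 (m1 x x) x) x) x = x \<longrightarrow> m1 (m1 x x) x \<noteq> x \<longrightarrow> phi x" by code_simp
  thus ?thesis unfolding G1_carrier G1_mult .
qed

lemma G1_D4: "zc0 \<in> carrier G1" "\<forall>x\<in>carrier G1. x \<otimes>\<^bsub>G1\<^esub> zc0 = zc0 \<otimes>\<^bsub>G1\<^esub> x"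
  "zc0 \<otimes>\<^bsub>G1\<^esub> zc0 \<otimes>\<^bsub>G1\<^esub> zc0 = zc0" "zc0 \<otimes>\<^bsub>G1\<^esub> zc0 \<noteq> zc0" "\<not> phi zc0"
proof -
  have "zc0 \<in> ({1,2,3,4} \<times> {0,1,2,3,4}) \<times> {0,1} \<and> (\<forall>x\<in>({1,2,3,4} \<times> {0,1,2,3,4}) \<times> {0,1}. m1 x zc0 = m1 zc0 x)
    \<and> m1 (m1 zc0 zc0) zc0 = zc0 \<and> m1 zc0 zc0 \<noteq> zc0 \<and> \<not> phi zc0" by code_simp
  thus "zc0 \<in> carrier G1" "\<forall>x\<in>carrier G1. x \<otimes>\<^bsub>G1\<^esub> zc0 = zc0 \<otimes>\<^bsub>G1\<^esub> x"
  "zc0 \<otimes>\<^bsub>G1\<^esub> zc0 \<otimes>\<^bsub>G1\<^esub> zc0 = zc0" "zc0 \<otimes>\<^bsub>G1\<^esub> zc0 \<noteq> zc0" "\<not> phi zc0"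
    unfolding G1_carrier G1_mult by auto
qed

lemma G1_card: "card (carrier G1) = 40"
  unfolding G1_carrier by code_simp


locale idx2 = group G for G (structure) +
  fixes P g
  assumes P: "subgroup P G"
    and comm: "\<And>x y. x \<in> P \<Longrightarrow> y \<in> P \<Longrightarrow> x \<otimes> y = y \<otimes> x"
    and gG: "g \<in> carrier G" and gP: "g \<notin> P"
    and dec: "\<And>x. x \<in> carrier G \<Longrightarrow> x \<in> P \<or> (\<exists>p\<in>P. x = p \<otimes> g)"
begin

definition kap where "kap x = g \<otimes> x \<otimes> inv g"
definition omg where "omg x = (if x \<in> P then inv x else kap (inv x))"

lemma cancel1[simp]: "a \<in> carrier G \<Longrightarrow> w \<in> carrier G \<Longrightarrow> inv a \<otimes> (a \<otimes> w) = w"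
  by (simp add: m_assoc[symmetric])
lemma cancel2[simp]: "a \<in> carrier G \<Longrightarrow> w \<in> carrier G \<Longrightarrow> a \<otimes> (inv a \<otimes> w) = w"
  by (simp add: m_assoc[symmetric])

lemma Pc: "x \<in> P \<Longrightarrow> x \<in> carrier G"
  by (rule subgroup.mem_carrier[OF P])
lemma Pm: "x \<in> P \<Longrightarrow> y \<in> P \<Longrightarrow> x \<otimes> y \<in> P"
  by (rule subgroup.m_closed[OF P])
lemma Pi: "x \<in> P \<Longrightarrow> inv x \<in> P"
  by (rule subgroup.m_inv_closed[OF P])

lemma gg: "g \<otimes> g \<in> P"
proof (rule ccontr)
  assume "g \<otimes> g \<notin> P"
  then obtain p where p: "p \<in> P" "g \<otimes> g = p \<otimes> g" using dec[of "g \<otimes> g"] gG by auto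
  hence "g = p" using gG Pc[OF p(1)] by simp
  thus False using p gP by simp
qed

lemma kapc: "x \<in> carrier G \<Longrightarrow> kap x \<in> carrier G"
  unfolding kap_def using gG by simp

lemma kap_hom: "x \<in> carrier G \<Longrightarrow> y \<in> carrier G \<Longrightarrow> kap (x \<otimes> y) = kap x \<otimes> kap y"
  unfolding kap_def using gG by (simp add: m_assoc)

lemma kap_g: "x \<in> carrier G \<Longrightarrow> g \<otimes> x = kap x \<otimes> g"
  unfolding kap_def using gG by (simp add: m_assoc)

lemma NF0: "r \<in> P \<Longrightarrow> r \<otimes> g \<notin> P"
proof
  assume r: "r \<in> P" and "r \<otimes> g \<in> P"
  hence "inv r \<otimes> (r \<otimes> g) \<in> P" using Pi Pm by blast
  hence "g \<in> P" using r Pc gG by (simp add: m_assoc[symmetric])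
  thus False using gP by simp
qed

lemma kapP: "p \<in> P \<Longrightarrow> kap p \<in> P"
proof (rule ccontr)
  assume p: "p \<in> P" and np: "kap p \<notin> P"
  then obtain q where q: "q \<in> P" "kap p = q \<otimes> g" using dec[of "kap p"] kapc Pc by blast
  have "g \<otimes> p = kap p \<otimes> g" using kap_g p Pc by blast
  also have "\<dots> = q \<otimes> (g \<otimes> g)" using q Pc gG by (simp add: m_assoc)
  finally have e: "g \<otimes> p = q \<otimes> (g \<otimes> g)" .
  have "g = q \<otimes> (g \<otimes> g) \<otimes> inv p"
    using e p q Pc gG gg by (metis inv_solve_right m_closed)
  moreover have "q \<otimes> (g \<otimes> g) \<otimes> inv p \<in> P" using q gg p Pm Pi by blast
  ultimately show False using gP by simp
qed

lemma kap_kap: "p \<in> P \<Longrightarrow> kap (kap p) = p"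
proof -
  assume p: "p \<in> P"
  have "kap (kap p) = (g \<otimes> g) \<otimes> p \<otimes> inv (g \<otimes> g)"
    unfolding kap_def using gG Pc[OF p] by (simp add: m_assoc inv_mult_group)
  also have "\<dots> = p \<otimes> (g \<otimes> g) \<otimes> inv (g \<otimes> g)" using comm[OF gg p] by simp
  also have "\<dots> = p" using gG Pc[OF p] by (simp add: m_assoc)
  finally show ?thesis .
qed

lemma g_kap: "q \<in> P \<Longrightarrow> g \<otimes> kap q = q \<otimes> g"
  using kap_g[of "kap q"] kap_kap kapc Pc by simp

lemma omg1: "r \<in> P \<Longrightarrow> omg r = inv r"
  unfolding omg_def by simp

lemma omg2: "r \<in> P \<Longrightarrow> omg (r \<otimes> g) = inv r \<otimes> inv g"
proof -
  assume r: "r \<in> P"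
  have "omg (r \<otimes> g) = g \<otimes> (inv g \<otimes> inv r) \<otimes> inv g"
    unfolding omg_def kap_def using NF0[OF r] r Pc gG by (simp add: inv_mult_group)
  also have "\<dots> = inv r \<otimes> inv g" using r Pc gG by (simp add: m_assoc[symmetric])
  finally show ?thesis .
qed

lemma omgc: "x \<in> carrier G \<Longrightarrow> omg x \<in> carrier G"
  unfolding omg_def using kapc by simp

lemma omg_hom: "x \<in> carrier G \<Longrightarrow> y \<in> carrier G \<Longrightarrow> omg (x \<otimes> y) = omg x \<otimes> omg y"
proof -
  assume x: "x \<in> carrier G" and y: "y \<in> carrier G"
  consider (a) "x \<in> P" "y \<in> P" | (b) r where "r \<in> P" "x = r \<otimes> g" "y \<in> P"
    | (c) q where "x \<in> P" "q \<in> P" "y = q \<otimes> g" | (d) r q where "r \<in> P" "x = r \<otimes> g" "q \<in> P" "y = q \<otimes> g"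
    using dec[OF x] dec[OF y] by blast
  thus ?thesis
  proof cases
    case a
    thus ?thesis using Pm omg1 Pc comm[OF Pi Pi, of x y] by (simp add: inv_mult_group)
  next
    case (c q)
    have "x \<otimes> y = (x \<otimes> q) \<otimes> g" using c Pc gG by (simp add: m_assoc)
    hence "omg (x \<otimes> y) = inv (x \<otimes> q) \<otimes> inv g" using omg2 Pm c by simp
    also have "\<dots> = inv x \<otimes> inv q \<otimes> inv g"
      using c Pc comm[OF Pi Pi, of x q] by (simp add: inv_mult_group)
    also have "\<dots> = omg x \<otimes> omg y" using c omg1 omg2 Pc gG by (simp add: m_assoc)
    finally show ?thesis .
  next
    case (b r)
    have "x \<otimes> y = (r \<otimes> kap y) \<otimes> g" using b Pc gG kap_g kapc by (simp add: m_assoc)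
    hence "omg (x \<otimes> y) = inv (r \<otimes> kap y) \<otimes> inv g" using omg2 Pm kapP b by simp
    also have "inv (r \<otimes> kap y) = inv r \<otimes> inv (kap y)"
      using b Pc kapP comm[OF Pi Pi, of r "kap y"] kapc gG by (simp add: inv_mult_group)
    also have "inv r \<otimes> inv (kap y) \<otimes> inv g = inv r \<otimes> (inv (kap y) \<otimes> inv g)"
      using b Pc kapc gG by (simp add: m_assoc)
    also have "inv (kap y) \<otimes> inv g = inv (g \<otimes> kap y)" using b Pc kapc gG by (simp add: inv_mult_group)
    also have "\<dots> = inv (y \<otimes> g)" using g_kap b by simp
    also have "\<dots> = inv g \<otimes> inv y" using b Pc gG by (simp add: inv_mult_group)
    also have "inv r \<otimes> (inv g \<otimes> inv y) = omg x \<otimes> omg y" using b omg1 omg2 Pc gG by (simp add: m_assoc)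
    finally show ?thesis .
  next
    case (d r q)
    have "x \<otimes> y = r \<otimes> (g \<otimes> q) \<otimes> g" using d Pc gG by (simp add: m_assoc)
    also have "\<dots> = r \<otimes> (kap q \<otimes> (g \<otimes> g))" using d Pc gG kap_g kapc by (simp add: m_assoc)
    finally have xy: "x \<otimes> y = r \<otimes> (kap q \<otimes> (g \<otimes> g))" .
    have kq: "kap q \<otimes> (g \<otimes> g) \<in> P" using kapP gg d Pm by blast
    have "omg (x \<otimes> y) = inv (r \<otimes> (kap q \<otimes> (g \<otimes> g)))" using xy omg1 Pm d kq by simp
    also have "\<dots> = inv r \<otimes> inv (kap q \<otimes> (g \<otimes> g))"
      using d kq Pc comm[OF Pi Pi, of r "kap q \<otimes> (g \<otimes> g)"] by (simp add: inv_mult_group)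
    also have "kap q \<otimes> (g \<otimes> g) = g \<otimes> q \<otimes> g" using d Pc gG kap_g kapc by (simp add: m_assoc)
    also have "inv (g \<otimes> q \<otimes> g) = inv g \<otimes> inv q \<otimes> inv g" using d Pc gG by (simp add: inv_mult_group m_assoc)
    also have "inv r \<otimes> (inv g \<otimes> inv q \<otimes> inv g) = omg x \<otimes> omg y" using d omg2 Pc gG by (simp add: m_assoc)
    finally show ?thesis .
  qed
qed

lemma omg_omg: "x \<in> carrier G \<Longrightarrow> omg (omg x) = x"
proof -
  assume x: "x \<in> carrier G"
  show ?thesis
  proof (cases "x \<in> P")
    case True thus ?thesis using omg1 Pi Pc by simp
  next
    case False
    then obtain r where r: "r \<in> P" "x = r \<otimes> g" using dec[OF x] by blast
    have ig: "inv g = inv (g \<otimes> g) \<otimes> g" using gG by (simp add: inv_mult_group m_assoc)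
    have "omg x = (inv r \<otimes> inv (g \<otimes> g)) \<otimes> g" using omg2 r ig Pc gG by (simp add: m_assoc)
    moreover have "inv r \<otimes> inv (g \<otimes> g) \<in> P" using r gg Pi Pm by blast
    ultimately have "omg (omg x) = inv (inv r \<otimes> inv (g \<otimes> g)) \<otimes> inv g" using omg2 by simp
    also have "\<dots> = (g \<otimes> g) \<otimes> r \<otimes> inv g" using r Pc gG by (simp add: inv_mult_group)
    also have "\<dots> = r \<otimes> (g \<otimes> g) \<otimes> inv g" using comm[OF gg r(1)] by simp
    also have "\<dots> = x" using r Pc gG by (simp add: m_assoc)
    finally show ?thesis .
  qed
qed

lemma invol_iso': "f \<in> hom G G \<Longrightarrow> (\<And>x. x \<in> carrier G \<Longrightarrow> f (f x) = x) \<Longrightarrow> f \<in> iso G G"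
  unfolding iso_iff
  apply (intro conjI, assumption)
   apply (auto simp: hom_def)[1]
   apply (metis hom_def image_eqI Pi_iff mem_Collect_eq)
  by (metis inj_onI)

lemma omg_iso: "omg \<in> iso G G"
  by (rule invol_iso') (auto simp: hom_def omgc omg_hom omg_omg)

lemma kap_iso: "kap \<in> iso G G"
proof -
  have h: "kap \<in> hom G G" by (auto simp: hom_def kapc kap_hom)
  have "inj_on kap (carrier G)"
    by (rule inj_onI) (simp add: kap_def gG)
  moreover have "kap ` carrier G = carrier G"
  proof
    show "kap ` carrier G \<subseteq> carrier G" using kapc by auto
    show "carrier G \<subseteq> kap ` carrier G"
    proof
      fix y assume y: "y \<in> carrier G"
      have "kap (inv g \<otimes> y \<otimes> g) = y" unfolding kap_def using y gG by (simp add: m_assoc)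
      thus "y \<in> kap ` carrier G" using y gG by (metis image_eqI inv_closed m_closed)
    qed
  qed
  ultimately show ?thesis using h by (simp add: iso_iff)
qed

end


lemma G1_D5: "\<forall>x\<in>carrier G1. x \<otimes>\<^bsub>G1\<^esub> x \<otimes>\<^bsub>G1\<^esub> x \<otimes>\<^bsub>G1\<^esub> x \<otimes>\<^bsub>G1\<^esub> x = x \<longrightarrow> x \<otimes>\<^bsub>G1\<^esub> x \<otimes>\<^bsub>G1\<^esub> x \<noteq> x
   \<longrightarrow> card {y \<in> carrier G1. x \<otimes>\<^bsub>G1\<^esub> y = y \<otimes>\<^bsub>G1\<^esub> x} = 8"
proof -
  have "\<forall>x\<in>({1,2,3,4} \<times> {0,1,2,3,4}) \<times> {0,1}. m1 (m1 (m1 (m1 x x) x) x) x = x \<longrightarrow> m1 (m1 x x) x \<noteq> x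
     \<longrightarrow> card (Set.filter (\<lambda>y. m1 x y = m1 y x) (({1,2,3,4} \<times> {0,1,2,3,4}) \<times> {0,1})) = 8" by code_simp
  thus ?thesis unfolding G1_carrier G1_mult Set.filter_eq .
qed


definition J0 :: "('a, 'm) monoid_scheme \<Rightarrow> 'a \<Rightarrow> 'a \<Rightarrow> bool" where
  "J0 G t z \<longleftrightarrow>
    t \<otimes>\<^bsub>G\<^esub> t \<otimes>\<^bsub>G\<^esub> t \<otimes>\<^bsub>G\<^esub> (t \<otimes>\<^bsub>G\<^esub> t \<otimes>\<^bsub>G\<^esub> z) = t \<otimes>\<^bsub>G\<^esub> z \<and>
    t \<otimes>\<^bsub>G\<^esub> z \<otimes>\<^bsub>G\<^esub> (t \<otimes>\<^bsub>G\<^esub> t \<otimes>\<^bsub>G\<^esub> z) = t \<otimes>\<^bsub>G\<^esub> t \<otimes>\<^bsub>G\<^esub> t \<and>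
    t \<otimes>\<^bsub>G\<^esub> t \<otimes>\<^bsub>G\<^esub> t \<noteq> t \<and>
    t \<otimes>\<^bsub>G\<^esub> t \<otimes>\<^bsub>G\<^esub> t \<otimes>\<^bsub>G\<^esub> z \<otimes>\<^bsub>G\<^esub> (t \<otimes>\<^bsub>G\<^esub> t \<otimes>\<^bsub>G\<^esub> t \<otimes>\<^bsub>G\<^esub> z) \<otimes>\<^bsub>G\<^esub> (t \<otimes>\<^bsub>G\<^esub> t \<otimes>\<^bsub>G\<^esub> t \<otimes>\<^bsub>G\<^esub> z) \<otimes>\<^bsub>G\<^esub> (t \<otimes>\<^bsub>G\<^esub> t \<otimes>\<^bsub>G\<^esub> z) = t \<otimes>\<^bsub>G\<^esub> t \<otimes>\<^bsub>G\<^esub> t \<and>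
    t \<otimes>\<^bsub>G\<^esub> z \<otimes>\<^bsub>G\<^esub> (t \<otimes>\<^bsub>G\<^esub> z) = t \<otimes>\<^bsub>G\<^esub> t \<and>
    t \<otimes>\<^bsub>G\<^esub> z \<otimes>\<^bsub>G\<^esub> z = t \<and>
    t \<otimes>\<^bsub>G\<^esub> t \<otimes>\<^bsub>G\<^esub> t \<otimes>\<^bsub>G\<^esub> z \<otimes>\<^bsub>G\<^esub> z = t \<otimes>\<^bsub>G\<^esub> t \<otimes>\<^bsub>G\<^esub> t \<and>
    t \<otimes>\<^bsub>G\<^esub> t \<otimes>\<^bsub>G\<^esub> t \<otimes>\<^bsub>G\<^esub> z \<otimes>\<^bsub>G\<^esub> (t \<otimes>\<^bsub>G\<^esub> t \<otimes>\<^bsub>G\<^esub> z) = t \<and>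
    t \<otimes>\<^bsub>G\<^esub> (t \<otimes>\<^bsub>G\<^esub> t \<otimes>\<^bsub>G\<^esub> t) = \<one>\<^bsub>G\<^esub> \<and>
    t \<otimes>\<^bsub>G\<^esub> t \<otimes>\<^bsub>G\<^esub> z \<otimes>\<^bsub>G\<^esub> (t \<otimes>\<^bsub>G\<^esub> t \<otimes>\<^bsub>G\<^esub> z) = \<one>\<^bsub>G\<^esub> \<and>
    t \<otimes>\<^bsub>G\<^esub> t \<otimes>\<^bsub>G\<^esub> t \<otimes>\<^bsub>G\<^esub> t \<otimes>\<^bsub>G\<^esub> t = t"

definition K0 :: "('a, 'm) monoid_scheme \<Rightarrow> 'a \<Rightarrow> 'a \<Rightarrow> 'a \<Rightarrow> bool" where
  "K0 G t z x \<longleftrightarrow>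
    (x \<otimes>\<^bsub>G\<^esub> x \<noteq> \<one>\<^bsub>G\<^esub> \<longrightarrow> x = t \<or> x = t \<otimes>\<^bsub>G\<^esub> t \<otimes>\<^bsub>G\<^esub> t \<or> x = t \<otimes>\<^bsub>G\<^esub> z \<or> x = t \<otimes>\<^bsub>G\<^esub> t \<otimes>\<^bsub>G\<^esub> t \<otimes>\<^bsub>G\<^esub> z) \<and>
    (x \<otimes>\<^bsub>G\<^esub> x = \<one>\<^bsub>G\<^esub> \<longrightarrow> x = \<one>\<^bsub>G\<^esub> \<or> x = t \<otimes>\<^bsub>G\<^esub> t \<or> x = z \<or> x = t \<otimes>\<^bsub>G\<^esub> t \<otimes>\<^bsub>G\<^esub> z)"

lemma B0_J: "\<forall>t\<in>carrier B0. \<forall>z\<in>carrier B0.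
    t \<otimes>\<^bsub>B0\<^esub> t \<noteq> \<one>\<^bsub>B0\<^esub> \<longrightarrow> z \<otimes>\<^bsub>B0\<^esub> z = \<one>\<^bsub>B0\<^esub>
    \<longrightarrow> z \<noteq> \<one>\<^bsub>B0\<^esub> \<longrightarrow> z \<noteq> t \<otimes>\<^bsub>B0\<^esub> t \<longrightarrow> J0 B0 t z"
  unfolding B0_carrier J0_def by code_simp

lemma B0_K: "\<forall>t\<in>carrier B0. \<forall>z\<in>carrier B0. \<forall>x\<in>carrier B0.
    t \<otimes>\<^bsub>B0\<^esub> t \<noteq> \<one>\<^bsub>B0\<^esub> \<longrightarrow> z \<otimes>\<^bsub>B0\<^esub> z = \<one>\<^bsub>B0\<^esub>
    \<longrightarrow> z \<noteq> \<one>\<^bsub>B0\<^esub> \<longrightarrow> z \<noteq> t \<otimes>\<^bsub>B0\<^esub> t \<longrightarrow> K0 B0 t z x"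
  unfolding B0_carrier K0_def by code_simp

lemma B_JK:
  fixes B :: "('b, 'x) monoid_scheme"
  assumes grp: "group B" and iso: "B \<cong> B0"
    and t: "t \<in> carrier B" and z: "z \<in> carrier B"
    and a: "t \<otimes>\<^bsub>B\<^esub> t \<noteq> \<one>\<^bsub>B\<^esub>" "z \<otimes>\<^bsub>B\<^esub> z = \<one>\<^bsub>B\<^esub>" "z \<noteq> \<one>\<^bsub>B\<^esub>" "z \<noteq> t \<otimes>\<^bsub>B\<^esub> t"
  shows "J0 B t z" "\<And>x. x \<in> carrier B \<Longrightarrow> K0 B t z x"
proof -
  interpret B: group B by (rule grp)
  obtain h where h: "h \<in> iso B B0" using iso unfolding is_iso_def by blast
  have hh: "h \<in> hom B B0" using h by (simp add: iso_iff)
  have g0: "group B0" by (simp add: DirProd_group)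
  have hm: "\<And>x y. x \<in> carrier B \<Longrightarrow> y \<in> carrier B \<Longrightarrow> h (x \<otimes>\<^bsub>B\<^esub> y) = h x \<otimes>\<^bsub>B0\<^esub> h y"
    using hh by (rule hom_mult)
  have h1: "h \<one>\<^bsub>B\<^esub> = \<one>\<^bsub>B0\<^esub>" using hom_one[OF hh grp g0] .
  have hc: "\<And>x. x \<in> carrier B \<Longrightarrow> h x \<in> carrier B0" using hh by (auto simp: hom_def)
  have inj: "inj_on h (carrier B)" using h by (simp add: iso_iff)
  have eq: "\<And>x y. x \<in> carrier B \<Longrightarrow> y \<in> carrier B \<Longrightarrow> h x = h y \<longleftrightarrow> x = y"
    using inj by (meson inj_on_eq_iff)
  have a': "h (t \<otimes>\<^bsub>B\<^esub> t) \<noteq> h \<one>\<^bsub>B\<^esub>" "h (z \<otimes>\<^bsub>B\<^esub> z) = h \<one>\<^bsub>B\<^esub>" "h z \<noteq> h \<one>\<^bsub>B\<^esub>" "h z \<noteq> h (t \<otimes>\<^bsub>B\<^esub> t)"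
    using a t z by (simp_all add: eq)
  hence a'': "h t \<otimes>\<^bsub>B0\<^esub> h t \<noteq> \<one>\<^bsub>B0\<^esub>" "h z \<otimes>\<^bsub>B0\<^esub> h z = \<one>\<^bsub>B0\<^esub>" "h z \<noteq> \<one>\<^bsub>B0\<^esub>" "h z \<noteq> h t \<otimes>\<^bsub>B0\<^esub> h t"
    using t z by (simp_all add: hm h1)
  have J: "J0 B0 (h t) (h z)" using B0_J hc[OF t] hc[OF z] a'' by blast
  have "h (t \<otimes>\<^bsub>B\<^esub> t \<otimes>\<^bsub>B\<^esub> t \<otimes>\<^bsub>B\<^esub> (t \<otimes>\<^bsub>B\<^esub> t \<otimes>\<^bsub>B\<^esub> z)) = h (t \<otimes>\<^bsub>B\<^esub> z) \<and>
    h (t \<otimes>\<^bsub>B\<^esub> z \<otimes>\<^bsub>B\<^esub> (t \<otimes>\<^bsub>B\<^esub> t \<otimes>\<^bsub>B\<^esub> z)) = h (t \<otimes>\<^bsub>B\<^esub> t \<otimes>\<^bsub>B\<^esub> t) \<and>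
    h (t \<otimes>\<^bsub>B\<^esub> t \<otimes>\<^bsub>B\<^esub> t) \<noteq> h t \<and>
    h (t \<otimes>\<^bsub>B\<^esub> t \<otimes>\<^bsub>B\<^esub> t \<otimes>\<^bsub>B\<^esub> z \<otimes>\<^bsub>B\<^esub> (t \<otimes>\<^bsub>B\<^esub> t \<otimes>\<^bsub>B\<^esub> t \<otimes>\<^bsub>B\<^esub> z) \<otimes>\<^bsub>B\<^esub> (t \<otimes>\<^bsub>B\<^esub> t \<otimes>\<^bsub>B\<^esub> t \<otimes>\<^bsub>B\<^esub> z) \<otimes>\<^bsub>B\<^esub> (t \<otimes>\<^bsub>B\<^esub> t \<otimes>\<^bsub>B\<^esub> z)) = h (t \<otimes>\<^bsub>B\<^esub> t \<otimes>\<^bsub>B\<^esub> t) \<and>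
    h (t \<otimes>\<^bsub>B\<^esub> z \<otimes>\<^bsub>B\<^esub> (t \<otimes>\<^bsub>B\<^esub> z)) = h (t \<otimes>\<^bsub>B\<^esub> t) \<and>
    h (t \<otimes>\<^bsub>B\<^esub> z \<otimes>\<^bsub>B\<^esub> z) = h t \<and>
    h (t \<otimes>\<^bsub>B\<^esub> t \<otimes>\<^bsub>B\<^esub> t \<otimes>\<^bsub>B\<^esub> z \<otimes>\<^bsub>B\<^esub> z) = h (t \<otimes>\<^bsub>B\<^esub> t \<otimes>\<^bsub>B\<^esub> t) \<and>
    h (t \<otimes>\<^bsub>B\<^esub> t \<otimes>\<^bsub>B\<^esub> t \<otimes>\<^bsub>B\<^esub> z \<otimes>\<^bsub>B\<^esub> (t \<otimes>\<^bsub>B\<^esub> t \<otimes>\<^bsub>B\<^esub> z)) = h t \<and>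
    h (t \<otimes>\<^bsub>B\<^esub> (t \<otimes>\<^bsub>B\<^esub> t \<otimes>\<^bsub>B\<^esub> t)) = h \<one>\<^bsub>B\<^esub> \<and>
    h (t \<otimes>\<^bsub>B\<^esub> t \<otimes>\<^bsub>B\<^esub> z \<otimes>\<^bsub>B\<^esub> (t \<otimes>\<^bsub>B\<^esub> t \<otimes>\<^bsub>B\<^esub> z)) = h \<one>\<^bsub>B\<^esub> \<and>
    h (t \<otimes>\<^bsub>B\<^esub> t \<otimes>\<^bsub>B\<^esub> t \<otimes>\<^bsub>B\<^esub> t \<otimes>\<^bsub>B\<^esub> t) = h t"
    using J t z unfolding J0_def by (simp add: hm h1)
  thus "J0 B t z" unfolding J0_def using t z by (simp add: eq)
  fix x assume x: "x \<in> carrier B"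
  have K: "K0 B0 (h t) (h z) (h x)" using B0_K hc[OF t] hc[OF z] hc[OF x] a'' by blast
  have "(h (x \<otimes>\<^bsub>B\<^esub> x) \<noteq> h \<one>\<^bsub>B\<^esub> \<longrightarrow> h x = h t \<or> h x = h (t \<otimes>\<^bsub>B\<^esub> t \<otimes>\<^bsub>B\<^esub> t) \<or> h x = h (t \<otimes>\<^bsub>B\<^esub> z) \<or> h x = h (t \<otimes>\<^bsub>B\<^esub> t \<otimes>\<^bsub>B\<^esub> t \<otimes>\<^bsub>B\<^esub> z)) \<and>
    (h (x \<otimes>\<^bsub>B\<^esub> x) = h \<one>\<^bsub>B\<^esub> \<longrightarrow> h x = h \<one>\<^bsub>B\<^esub> \<or> h x = h (t \<otimes>\<^bsub>B\<^esub> t) \<or> h x = h z \<or> h x = h (t \<otimes>\<^bsub>B\<^esub> t \<otimes>\<^bsub>B\<^esub> z))"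
    using K t z x unfolding K0_def by (simp add: hm h1)
  thus "K0 B t z x" unfolding K0_def using t z x by (simp add: eq)
qed


lemma sigma_iso:
  assumes gB: "group B" and gA: "group A" and gC: "group CC" and gD: "group D"
    and rh: "\<rho> \<in> hom D CC" and ri: "inj_on \<rho> (carrier D)"
    and al: "\<alpha> \<in> iso A CC" and ph: "\<pi> \<in> hom B A" and pinj: "inj_on \<pi> (carrier B)"
    and img: "\<alpha> ` (\<pi> ` carrier B) = \<rho> ` carrier D"
  shows "(\<lambda>b. inv_into (carrier D) \<rho> (\<alpha> (\<pi> b))) \<in> iso B D"
    and "\<forall>b\<in>carrier B. \<rho> (inv_into (carrier D) \<rho> (\<alpha> (\<pi> b))) = \<alpha> (\<pi> b)"
proof -
  define \<sigma> where "\<sigma> = (\<lambda>b. inv_into (carrier D) \<rho> (\<alpha> (\<pi> b)))"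
  have ah: "\<alpha> \<in> hom A CC" and ainj: "inj_on \<alpha> (carrier A)" using al by (auto simp: iso_iff)
  have pc: "\<And>b. b \<in> carrier B \<Longrightarrow> \<pi> b \<in> carrier A" using ph by (auto simp: hom_def)
  have mem: "\<And>b. b \<in> carrier B \<Longrightarrow> \<alpha> (\<pi> b) \<in> \<rho> ` carrier D" using img by blast
  have s1: "\<And>b. b \<in> carrier B \<Longrightarrow> \<sigma> b \<in> carrier D" unfolding \<sigma>_def using mem by (simp add: inv_into_into)
  have s2: "\<And>b. b \<in> carrier B \<Longrightarrow> \<rho> (\<sigma> b) = \<alpha> (\<pi> b)" unfolding \<sigma>_def using mem by (simp add: f_inv_into_f)
  show "\<forall>b\<in>carrier B. \<rho> (inv_into (carrier D) \<rho> (\<alpha> (\<pi> b))) = \<alpha> (\<pi> b)" using s2 unfolding \<sigma>_def by blast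
  have hom: "\<sigma> \<in> hom B D"
  proof (rule homI)
    fix x assume "x \<in> carrier B" thus "\<sigma> x \<in> carrier D" by (rule s1)
  next
    fix x y assume x: "x \<in> carrier B" and y: "y \<in> carrier B"
    have "\<rho> (\<sigma> (x \<otimes>\<^bsub>B\<^esub> y)) = \<alpha> (\<pi> (x \<otimes>\<^bsub>B\<^esub> y))" using s2 x y group.subgroup_self[OF gB] by (simp add: group.is_monoid gB monoid.m_closed)
    also have "\<dots> = \<alpha> (\<pi> x) \<otimes>\<^bsub>CC\<^esub> \<alpha> (\<pi> y)" using x y pc hom_mult[OF ph] hom_mult[OF ah] by simp
    also have "\<dots> = \<rho> (\<sigma> x \<otimes>\<^bsub>D\<^esub> \<sigma> y)" using x y s1 s2 hom_mult[OF rh] by simp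
    finally have "\<rho> (\<sigma> (x \<otimes>\<^bsub>B\<^esub> y)) = \<rho> (\<sigma> x \<otimes>\<^bsub>D\<^esub> \<sigma> y)" .
    moreover have "\<sigma> (x \<otimes>\<^bsub>B\<^esub> y) \<in> carrier D" using s1 x y by (simp add: group.is_monoid gB monoid.m_closed)
    moreover have "\<sigma> x \<otimes>\<^bsub>D\<^esub> \<sigma> y \<in> carrier D" using s1 x y by (simp add: group.is_monoid gD monoid.m_closed)
    ultimately show "\<sigma> (x \<otimes>\<^bsub>B\<^esub> y) = \<sigma> x \<otimes>\<^bsub>D\<^esub> \<sigma> y" using ri by (meson inj_onD)
  qed
  have inj: "inj_on \<sigma> (carrier B)"
  proof (rule inj_onI)
    fix x y assume x: "x \<in> carrier B" and y: "y \<in> carrier B" and e: "\<sigma> x = \<sigma> y"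
    hence "\<alpha> (\<pi> x) = \<alpha> (\<pi> y)" using s2 by metis
    hence "\<pi> x = \<pi> y" using ainj pc x y by (meson inj_onD)
    thus "x = y" using pinj x y by (meson inj_onD)
  qed
  have surj: "\<sigma> ` carrier B = carrier D"
  proof
    show "\<sigma> ` carrier B \<subseteq> carrier D" using s1 by auto
    show "carrier D \<subseteq> \<sigma> ` carrier B"
    proof
      fix d assume d: "d \<in> carrier D"
      hence "\<rho> d \<in> \<alpha> ` (\<pi> ` carrier B)" using img by blast
      then obtain b where b: "b \<in> carrier B" "\<rho> d = \<alpha> (\<pi> b)" by blast
      hence "\<rho> d = \<rho> (\<sigma> b)" using s2 by simp
      hence "d = \<sigma> b" using ri d s1[OF b(1)] by (meson inj_onD)
      thus "d \<in> \<sigma> ` carrier B" using b by blast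
    qed
  qed
  show "\<sigma> \<in> iso B D" using hom inj surj by (simp add: iso_iff \<sigma>_def)
qed

lemma invol_iso: "f \<in> hom G G \<Longrightarrow> (\<And>x. x \<in> carrier G \<Longrightarrow> f (f x) = x) \<Longrightarrow> f \<in> iso G G"
  unfolding iso_iff
  apply (intro conjI, assumption)
   apply (auto simp: hom_def)[1]
   apply (metis hom_def image_eqI Pi_iff mem_Collect_eq)
  by (metis inj_onI)

lemma hom_via:
  assumes mB: "monoid B" and ph: "\<pi> \<in> hom B A" and pinj: "inj_on \<pi> (carrier B)" and ah: "a \<in> hom A A"
    and r: "\<And>b. b \<in> carrier B \<Longrightarrow> r b \<in> carrier B \<and> a (\<pi> b) = \<pi> (r b)"
  shows "r \<in> hom B B"
proof (rule homI)
  fix x assume "x \<in> carrier B" thus "r x \<in> carrier B" using r by blast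
next
  fix x y assume x: "x \<in> carrier B" and y: "y \<in> carrier B"
  have xy: "x \<otimes>\<^bsub>B\<^esub> y \<in> carrier B" using x y mB by (simp add: monoid.m_closed)
  have pc: "\<And>b. b \<in> carrier B \<Longrightarrow> \<pi> b \<in> carrier A" using ph by (auto simp: hom_def)
  have "\<pi> (r (x \<otimes>\<^bsub>B\<^esub> y)) = a (\<pi> (x \<otimes>\<^bsub>B\<^esub> y))" using r xy by simp
  also have "\<dots> = a (\<pi> x) \<otimes>\<^bsub>A\<^esub> a (\<pi> y)" using hom_mult[OF ph x y] hom_mult[OF ah pc[OF x] pc[OF y]] by simp
  also have "\<dots> = \<pi> (r x \<otimes>\<^bsub>B\<^esub> r y)" using r x y hom_mult[OF ph] by simp
  finally show "r (x \<otimes>\<^bsub>B\<^esub> y) = r x \<otimes>\<^bsub>B\<^esub> r y"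
    using pinj r xy x y mB by (meson inj_onD monoid.m_closed)
qed

lemma index2:
  assumes gG: "group G" and P: "subgroup P G" and c: "card (rcosets\<^bsub>G\<^esub> P) = 2"
  shows "\<exists>g\<in>carrier G. g \<notin> P \<and> (\<forall>x\<in>carrier G. x \<in> P \<or> (\<exists>p\<in>P. x = p \<otimes>\<^bsub>G\<^esub> g))"
proof -
  interpret G: group G by (rule gG)
  have fin: "finite (rcosets\<^bsub>G\<^esub> P)" using c by (metis card.infinite zero_neq_numeral)
  have Pin: "P \<in> rcosets\<^bsub>G\<^esub> P"
    using G.rcosetsI[of P "\<one>\<^bsub>G\<^esub>"] subgroup.subset[OF P] subgroup.rcos_const[OF P gG subgroup.one_closed[OF P]]
    by simp
  have "\<exists>g\<in>carrier G. g \<notin> P"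
  proof (rule ccontr)
    assume "\<not> ?thesis"
    hence all: "\<And>x. x \<in> carrier G \<Longrightarrow> x \<in> P" by blast
    have "rcosets\<^bsub>G\<^esub> P = {P}"
      unfolding RCOSETS_def using subgroup.rcos_const[OF P gG] all by auto
    thus False using c by simp
  qed
  then obtain g where g: "g \<in> carrier G" "g \<notin> P" by blast
  have gin: "P #>\<^bsub>G\<^esub> g \<in> rcosets\<^bsub>G\<^esub> P" using G.rcosetsI[OF subgroup.subset[OF P] g(1)] .
  have gne: "P #>\<^bsub>G\<^esub> g \<noteq> P" using G.rcos_self[OF g(1) P] g(2) by auto
  show ?thesis
  proof (intro bexI[OF _ g(1)] conjI ballI g(2))
    fix x assume x: "x \<in> carrier G"
    have xin: "P #>\<^bsub>G\<^esub> x \<in> rcosets\<^bsub>G\<^esub> P" using G.rcosetsI[OF subgroup.subset[OF P] x] .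
    have "P #>\<^bsub>G\<^esub> x = P \<or> P #>\<^bsub>G\<^esub> x = P #>\<^bsub>G\<^esub> g"
    proof (rule ccontr)
      assume "\<not> ?thesis"
      hence d: "P #>\<^bsub>G\<^esub> x \<noteq> P" "P #>\<^bsub>G\<^esub> x \<noteq> P #>\<^bsub>G\<^esub> g" by auto
      hence "card {P, P #>\<^bsub>G\<^esub> g, P #>\<^bsub>G\<^esub> x} = 3" using gne by (simp add: card_insert_if)
      moreover have "card {P, P #>\<^bsub>G\<^esub> g, P #>\<^bsub>G\<^esub> x} \<le> card (rcosets\<^bsub>G\<^esub> P)"
        using Pin gin xin fin by (intro card_mono) auto
      ultimately show False using c by simp
    qed
    moreover have "x \<in> P #>\<^bsub>G\<^esub> x" using G.rcos_self[OF x P] .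
    ultimately show "x \<in> P \<or> (\<exists>p\<in>P. x = p \<otimes>\<^bsub>G\<^esub> g)"
      unfolding r_coset_def by auto
  qed
qed

lemma sub2:
  assumes gG: "group G" and c: "c \<in> carrier G" and cc: "c \<otimes>\<^bsub>G\<^esub> c = \<one>\<^bsub>G\<^esub>"
  shows "subgroup {\<one>\<^bsub>G\<^esub>, c} G"
proof -
  interpret G: group G by (rule gG)
  have ic: "inv\<^bsub>G\<^esub> c = c" using G.inv_equality[OF cc c c] .
  show ?thesis
    by (rule subgroup.intro) (auto simp: c cc ic)
qed

lemma normal2:
  assumes gG: "group G" and c: "c \<in> carrier G" and cc: "c \<otimes>\<^bsub>G\<^esub> c = \<one>\<^bsub>G\<^esub>"
    and cent: "\<forall>x\<in>carrier G. x \<otimes>\<^bsub>G\<^esub> c = c \<otimes>\<^bsub>G\<^esub> x"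
  shows "{\<one>\<^bsub>G\<^esub>, c} \<lhd> G"
proof -
  interpret G: group G by (rule gG)
  show ?thesis unfolding G.normal_inv_iff
  proof (intro conjI ballI sub2[OF gG c cc])
    fix x h assume x: "x \<in> carrier G" and h: "h \<in> {\<one>\<^bsub>G\<^esub>, c}"
    show "x \<otimes>\<^bsub>G\<^esub> h \<otimes>\<^bsub>G\<^esub> inv\<^bsub>G\<^esub> x \<in> {\<one>\<^bsub>G\<^esub>, c}"
    proof (cases "h = c")
      case True
      have "x \<otimes>\<^bsub>G\<^esub> c \<otimes>\<^bsub>G\<^esub> inv\<^bsub>G\<^esub> x = c \<otimes>\<^bsub>G\<^esub> x \<otimes>\<^bsub>G\<^esub> inv\<^bsub>G\<^esub> x" using cent x by simp
      also have "\<dots> = c" using x c by (simp add: G.m_assoc)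
      finally show ?thesis using True by simp
    next
      case False thus ?thesis using h x by simp
    qed
  qed
qed

lemma agree:
  assumes gB: "group B" and gH: "group H" and f: "f \<in> hom B H" and f': "f' \<in> hom B H"
    and t: "t \<in> carrier B" and z: "z \<in> carrier B" and ft: "f t = f' t" and fz: "f z = f' z"
    and x: "x \<in> carrier B"
    and dis: "x = \<one>\<^bsub>B\<^esub> \<or> x = t \<or> x = t \<otimes>\<^bsub>B\<^esub> t \<or> x = t \<otimes>\<^bsub>B\<^esub> t \<otimes>\<^bsub>B\<^esub> t
    \<or> x = z \<or> x = t \<otimes>\<^bsub>B\<^esub> z \<or> x = t \<otimes>\<^bsub>B\<^esub> t \<otimes>\<^bsub>B\<^esub> z
    \<or> x = t \<otimes>\<^bsub>B\<^esub> t \<otimes>\<^bsub>B\<^esub> t \<otimes>\<^bsub>B\<^esub> z"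
  shows "f x = f' x"
proof -
  interpret B: group B by (rule gB)
  have m: "\<And>a b. a \<in> carrier B \<Longrightarrow> b \<in> carrier B \<Longrightarrow> f (a \<otimes>\<^bsub>B\<^esub> b) = f a \<otimes>\<^bsub>H\<^esub> f b" using hom_mult[OF f] .
  have m': "\<And>a b. a \<in> carrier B \<Longrightarrow> b \<in> carrier B \<Longrightarrow> f' (a \<otimes>\<^bsub>B\<^esub> b) = f' a \<otimes>\<^bsub>H\<^esub> f' b" using hom_mult[OF f'] .
  have o: "f \<one>\<^bsub>B\<^esub> = f' \<one>\<^bsub>B\<^esub>" using hom_one[OF f gB gH] hom_one[OF f' gB gH] by simp
  from dis show ?thesis using t z by (elim disjE) (simp_all add: m m' ft fz o)
qed



lemma final_step:
  assumes al: "\<alpha> \<in> iso A1 C1" and be: "\<beta> \<in> iso A2 C2"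
    and s1: "\<sigma>1 \<in> iso B D" and s1e: "\<forall>b\<in>carrier B. \<rho>1 (\<sigma>1 b) = \<alpha> (\<pi>1 b)"
    and s2e: "\<forall>b\<in>carrier B. \<rho>2 (\<sigma>2 b) = \<beta> (\<pi>2 b)"
    and th: "\<forall>b\<in>carrier B. \<theta> b \<in> carrier B \<and> \<sigma>2 (\<theta> b) = \<sigma>1 b"
    and a1: "a1 \<in> iso A1 A1" and r1: "r1 \<in> iso B B" and a1e: "\<forall>b\<in>carrier B. a1 (\<pi>1 b) = \<pi>1 (r1 b)"
    and a2: "a2 \<in> iso A2 A2" and a2e: "\<forall>b\<in>carrier B. a2 (\<pi>2 b) = \<pi>2 (\<theta> (r1 b))"
  shows "isomorphic_amalgams A1 A2 B \<pi>1 \<pi>2 C1 C2 D \<rho>1 \<rho>2"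
  unfolding isomorphic_amalgams_def
proof (intro exI conjI)
  show "\<alpha> \<circ> a1 \<in> iso A1 C1" using iso_set_trans[OF a1 al] .
  show "\<beta> \<circ> a2 \<in> iso A2 C2" using iso_set_trans[OF a2 be] .
  show "\<sigma>1 \<circ> r1 \<in> iso B D" using iso_set_trans[OF r1 s1] .
  have rc: "\<And>b. b \<in> carrier B \<Longrightarrow> r1 b \<in> carrier B" using r1 by (auto simp: iso_iff hom_def)
  show "\<forall>b\<in>carrier B. (\<alpha> \<circ> a1) (\<pi>1 b) = \<rho>1 ((\<sigma>1 \<circ> r1) b)"
    using a1e s1e rc by simp
  show "\<forall>b\<in>carrier B. (\<beta> \<circ> a2) (\<pi>2 b) = \<rho>2 ((\<sigma>1 \<circ> r1) b)"
  proof
    fix b assume b: "b \<in> carrier B"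
    have "(\<beta> \<circ> a2) (\<pi>2 b) = \<beta> (\<pi>2 (\<theta> (r1 b)))" using a2e b by simp
    also have "\<dots> = \<rho>2 (\<sigma>2 (\<theta> (r1 b)))" using s2e th rc b by metis
    also have "\<dots> = \<rho>2 (\<sigma>1 (r1 b))" using th rc b by simp
    finally show "(\<beta> \<circ> a2) (\<pi>2 b) = \<rho>2 ((\<sigma>1 \<circ> r1) b)" by simp
  qed
qed



lemma A1_side:
  fixes A1 :: "('a1, 'x1) monoid_scheme" and B :: "('b, 'x3) monoid_scheme"
  assumes gA1: "group A1" and gB: "group B" and ph: "\<pi>1 \<in> hom B A1" and pinj: "inj_on \<pi>1 (carrier B)"
    and f1: "f1 \<in> iso A1 G1" and Biso: "B \<cong> B0"
  shows "\<exists>z1\<in>carrier B. z1 \<otimes>\<^bsub>B\<^esub> z1 = \<one>\<^bsub>B\<^esub> \<and> z1 \<noteq> \<one>\<^bsub>B\<^esub> \<and> (\<forall>t\<in>carrier B. z1 \<noteq> t \<otimes>\<^bsub>B\<^esub> t)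
    \<and> {\<one>\<^bsub>A1\<^esub>, \<pi>1 z1} \<lhd> A1
    \<and> (\<exists>a1 r1. a1 \<in> iso A1 A1 \<and> r1 \<in> iso B B \<and> (\<forall>b\<in>carrier B. a1 (\<pi>1 b) = \<pi>1 (r1 b))
        \<and> (\<forall>t\<in>carrier B. t \<otimes>\<^bsub>B\<^esub> t \<noteq> \<one>\<^bsub>B\<^esub> \<longrightarrow> r1 t = t \<otimes>\<^bsub>B\<^esub> z1) \<and> r1 z1 = z1)"
proof -
  interpret A1: group A1 by (rule gA1)
  interpret B: group B by (rule gB)
  note BS = B_structure[OF gB Biso]
  have fh: "f1 \<in> hom A1 G1" and finj: "inj_on f1 (carrier A1)" and fsurj: "f1 ` carrier A1 = carrier G1"
    using f1 by (auto simp: iso_iff)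
  have fm: "\<And>x y. x \<in> carrier A1 \<Longrightarrow> y \<in> carrier A1 \<Longrightarrow> f1 (x \<otimes>\<^bsub>A1\<^esub> y) = f1 x \<otimes>\<^bsub>G1\<^esub> f1 y"
    using hom_mult[OF fh] .
  have fc: "\<And>x. x \<in> carrier A1 \<Longrightarrow> f1 x \<in> carrier G1" using fh by (auto simp: hom_def)
  have feq: "\<And>x y. x \<in> carrier A1 \<Longrightarrow> y \<in> carrier A1 \<Longrightarrow> f1 x = f1 y \<longleftrightarrow> x = y"
    using finj by (meson inj_on_eq_iff)
  have pm: "\<And>x y. x \<in> carrier B \<Longrightarrow> y \<in> carrier B \<Longrightarrow> \<pi>1 (x \<otimes>\<^bsub>B\<^esub> y) = \<pi>1 x \<otimes>\<^bsub>A1\<^esub> \<pi>1 y"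
    using hom_mult[OF ph] .
  have pc: "\<And>x. x \<in> carrier B \<Longrightarrow> \<pi>1 x \<in> carrier A1" using ph by (auto simp: hom_def)
  have p1: "\<pi>1 \<one>\<^bsub>B\<^esub> = \<one>\<^bsub>A1\<^esub>" using hom_one[OF ph gB gA1] .
  have peq: "\<And>x y. x \<in> carrier B \<Longrightarrow> y \<in> carrier B \<Longrightarrow> \<pi>1 x = \<pi>1 y \<longleftrightarrow> x = y"
    using pinj by (meson inj_on_eq_iff)
  define F where "F = (\<lambda>b. f1 (\<pi>1 b))"
  have Fm: "\<And>x y. x \<in> carrier B \<Longrightarrow> y \<in> carrier B \<Longrightarrow> F (x \<otimes>\<^bsub>B\<^esub> y) = F x \<otimes>\<^bsub>G1\<^esub> F y"
    unfolding F_def using pm pc fm by simp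
  have Fc: "\<And>x. x \<in> carrier B \<Longrightarrow> F x \<in> carrier G1" unfolding F_def using pc fc by simp
  have Feq: "\<And>x y. x \<in> carrier B \<Longrightarrow> y \<in> carrier B \<Longrightarrow> F x = F y \<longleftrightarrow> x = y"
    unfolding F_def using pc feq peq by simp
  have ord4: "F u \<otimes>\<^bsub>G1\<^esub> F u \<otimes>\<^bsub>G1\<^esub> F u \<otimes>\<^bsub>G1\<^esub> F u \<otimes>\<^bsub>G1\<^esub> F u = F u \<and> F u \<otimes>\<^bsub>G1\<^esub> F u \<otimes>\<^bsub>G1\<^esub> F u \<noteq> F u"
    if u: "u \<in> carrier B" and uu: "u \<otimes>\<^bsub>B\<^esub> u \<noteq> \<one>\<^bsub>B\<^esub>" for u
  proof -
    have "u \<otimes>\<^bsub>B\<^esub> u \<otimes>\<^bsub>B\<^esub> u \<otimes>\<^bsub>B\<^esub> u = \<one>\<^bsub>B\<^esub>" using BS(1) u by blast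
    hence "u \<otimes>\<^bsub>B\<^esub> u \<otimes>\<^bsub>B\<^esub> u \<otimes>\<^bsub>B\<^esub> u \<otimes>\<^bsub>B\<^esub> u = u" using u by simp
    hence 1: "F (u \<otimes>\<^bsub>B\<^esub> u \<otimes>\<^bsub>B\<^esub> u \<otimes>\<^bsub>B\<^esub> u \<otimes>\<^bsub>B\<^esub> u) = F u" by simp
    have "u \<otimes>\<^bsub>B\<^esub> u \<otimes>\<^bsub>B\<^esub> u \<noteq> \<one>\<^bsub>B\<^esub> \<otimes>\<^bsub>B\<^esub> u" using uu u by (metis B.m_closed B.right_cancel B.one_closed)
    hence "u \<otimes>\<^bsub>B\<^esub> u \<otimes>\<^bsub>B\<^esub> u \<noteq> u" using u by simp
    hence 2: "F (u \<otimes>\<^bsub>B\<^esub> u \<otimes>\<^bsub>B\<^esub> u) \<noteq> F u" using u by (simp add: Feq)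
    show ?thesis using 1 2 u by (simp add: Fm)
  qed
  have phit: "phi (F u)" if u: "u \<in> carrier B" and uu: "u \<otimes>\<^bsub>B\<^esub> u \<noteq> \<one>\<^bsub>B\<^esub>" for u
    using G1_D3 Fc[OF u] ord4[OF u uu] by blast
  define zc where "zc = inv_into (carrier A1) f1 zc0"
  have zcA: "zc \<in> carrier A1" unfolding zc_def using G1_D4(1) fsurj by (metis inv_into_into)
  have fzc: "f1 zc = zc0" unfolding zc_def using G1_D4(1) fsurj by (simp add: f_inv_into_f)
  have cent: "\<And>x. x \<in> carrier A1 \<Longrightarrow> x \<otimes>\<^bsub>A1\<^esub> zc = zc \<otimes>\<^bsub>A1\<^esub> x"
  proof -
    fix x assume x: "x \<in> carrier A1"
    have "f1 x \<otimes>\<^bsub>G1\<^esub> zc0 = zc0 \<otimes>\<^bsub>G1\<^esub> f1 x" using G1_D4(2) fc[OF x] by blast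
    hence "f1 (x \<otimes>\<^bsub>A1\<^esub> zc) = f1 (zc \<otimes>\<^bsub>A1\<^esub> x)" using x zcA fm fzc by simp
    thus "x \<otimes>\<^bsub>A1\<^esub> zc = zc \<otimes>\<^bsub>A1\<^esub> x" using x zcA by (simp add: feq)
  qed
  have "f1 (zc \<otimes>\<^bsub>A1\<^esub> zc \<otimes>\<^bsub>A1\<^esub> zc) = f1 zc" using zcA fm fzc G1_D4(3) by simp
  hence "zc \<otimes>\<^bsub>A1\<^esub> zc \<otimes>\<^bsub>A1\<^esub> zc = \<one>\<^bsub>A1\<^esub> \<otimes>\<^bsub>A1\<^esub> zc" using zcA by (simp add: feq)
  hence zc2: "zc \<otimes>\<^bsub>A1\<^esub> zc = \<one>\<^bsub>A1\<^esub>" using zcA by (metis A1.m_closed A1.one_closed A1.right_cancel)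
  have "f1 (zc \<otimes>\<^bsub>A1\<^esub> zc) \<noteq> f1 zc" using zcA fm fzc G1_D4(4) by simp
  hence zc1: "zc \<noteq> \<one>\<^bsub>A1\<^esub>" using zcA by auto
  obtain t0 where t0: "t0 \<in> carrier B" "t0 \<otimes>\<^bsub>B\<^esub> t0 \<noteq> \<one>\<^bsub>B\<^esub>" using BS(4) by blast
  define Cen where "Cen = {y \<in> carrier G1. F t0 \<otimes>\<^bsub>G1\<^esub> y = y \<otimes>\<^bsub>G1\<^esub> F t0}"
  have cardCen: "card Cen = 8" unfolding Cen_def using G1_D5 Fc[OF t0(1)] ord4[OF t0] by blast
  have sub: "F ` carrier B \<subseteq> Cen"
  proof
    fix y assume "y \<in> F ` carrier B"
    then obtain b where b: "b \<in> carrier B" "y = F b" by blast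
    have "F t0 \<otimes>\<^bsub>G1\<^esub> F b = F b \<otimes>\<^bsub>G1\<^esub> F t0" using Fm[OF t0(1) b(1)] Fm[OF b(1) t0(1)] BS(2) t0(1) b(1) by metis
    thus "y \<in> Cen" unfolding Cen_def using b Fc by simp
  qed
  have finCen: "finite Cen" using cardCen by (metis card.infinite zero_neq_numeral)
  have "card (F ` carrier B) = card (carrier B)"
    by (rule card_image) (meson Feq inj_onI)
  hence "card (F ` carrier B) = 8" using BS(5) by simp
  hence FB: "F ` carrier B = Cen" using card_subset_eq[OF finCen sub] cardCen by simp
  have "F t0 \<otimes>\<^bsub>G1\<^esub> zc0 = zc0 \<otimes>\<^bsub>G1\<^esub> F t0" using G1_D4(2) Fc[OF t0(1)] by blast
  hence "zc0 \<in> Cen" unfolding Cen_def using G1_D4(1) by simp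
  then obtain z1 where z1: "z1 \<in> carrier B" "F z1 = zc0" using FB by (metis imageE)
  have pz1: "\<pi>1 z1 = zc" using z1 fzc pc zcA feq unfolding F_def by metis
  have z1z1: "z1 \<otimes>\<^bsub>B\<^esub> z1 = \<one>\<^bsub>B\<^esub>" using pm[OF z1(1) z1(1)] pz1 zc2 p1 peq z1(1) by (metis B.m_closed B.one_closed)
  have z11: "z1 \<noteq> \<one>\<^bsub>B\<^esub>" using pz1 p1 zc1 by auto
  have zsq: "\<forall>t\<in>carrier B. z1 \<noteq> t \<otimes>\<^bsub>B\<^esub> t"
  proof (intro ballI notI)
    fix t assume t: "t \<in> carrier B" and e: "z1 = t \<otimes>\<^bsub>B\<^esub> t"
    have "F t \<otimes>\<^bsub>G1\<^esub> F t \<noteq> zc0" using G1_D1 Fc[OF t] by blast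
    thus False using e z1(2) Fm[OF t t] by simp
  qed
  have nrm: "{\<one>\<^bsub>A1\<^esub>, \<pi>1 z1} \<lhd> A1" using normal2[OF gA1 zcA zc2] cent pz1 by simp
  define mu where "mu = (\<lambda>x. if phi (f1 x) then x \<otimes>\<^bsub>A1\<^esub> zc else x)"
  have zz: "\<And>w. w \<in> carrier A1 \<Longrightarrow> zc \<otimes>\<^bsub>A1\<^esub> (zc \<otimes>\<^bsub>A1\<^esub> w) = w"
    using zcA zc2 by (simp add: A1.m_assoc[symmetric])
  have Pm: "\<And>x y. x \<in> carrier A1 \<Longrightarrow> y \<in> carrier A1 \<Longrightarrow> phi (f1 (x \<otimes>\<^bsub>A1\<^esub> y)) = (phi (f1 x) \<noteq> phi (f1 y))"
  proof -
    fix x y assume x: "x \<in> carrier A1" and y: "y \<in> carrier A1"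
    have "phi (f1 x \<otimes>\<^bsub>G1\<^esub> f1 y) = (phi (f1 x) \<noteq> phi (f1 y))" using G1_D2 fc[OF x] fc[OF y] by blast
    thus "phi (f1 (x \<otimes>\<^bsub>A1\<^esub> y)) = (phi (f1 x) \<noteq> phi (f1 y))" using fm[OF x y] by simp
  qed
  have muc: "\<And>x. x \<in> carrier A1 \<Longrightarrow> mu x \<in> carrier A1" unfolding mu_def using zcA by simp
  have mu_hom: "mu \<in> hom A1 A1"
  proof (rule homI)
    fix x assume "x \<in> carrier A1" thus "mu x \<in> carrier A1" by (rule muc)
  next
    fix x y assume x: "x \<in> carrier A1" and y: "y \<in> carrier A1"
    have e1: "(x \<otimes>\<^bsub>A1\<^esub> zc) \<otimes>\<^bsub>A1\<^esub> (y \<otimes>\<^bsub>A1\<^esub> zc) = x \<otimes>\<^bsub>A1\<^esub> y"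
      using cent[OF y] x y zcA zz by (simp add: A1.m_assoc)
    have e2: "(x \<otimes>\<^bsub>A1\<^esub> zc) \<otimes>\<^bsub>A1\<^esub> y = x \<otimes>\<^bsub>A1\<^esub> y \<otimes>\<^bsub>A1\<^esub> zc"
      using cent[OF y] x y zcA by (simp add: A1.m_assoc)
    have e3: "x \<otimes>\<^bsub>A1\<^esub> (y \<otimes>\<^bsub>A1\<^esub> zc) = x \<otimes>\<^bsub>A1\<^esub> y \<otimes>\<^bsub>A1\<^esub> zc"
      using x y zcA by (simp add: A1.m_assoc)
    show "mu (x \<otimes>\<^bsub>A1\<^esub> y) = mu x \<otimes>\<^bsub>A1\<^esub> mu y"
      unfolding mu_def using Pm[OF x y] e1 e2 e3 by auto
  qed
  have mumu: "\<And>x. x \<in> carrier A1 \<Longrightarrow> mu (mu x) = x"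
  proof -
    fix x assume x: "x \<in> carrier A1"
    show "mu (mu x) = x"
    proof (cases "phi (f1 x)")
      case True
      have "phi (f1 (x \<otimes>\<^bsub>A1\<^esub> zc))" using Pm[OF x zcA] True fzc G1_D4(5) by simp
      thus ?thesis unfolding mu_def using True x zcA zc2 by (simp add: A1.m_assoc)
    next
      case False thus ?thesis unfolding mu_def by simp
    qed
  qed
  have mu_iso: "mu \<in> iso A1 A1" using invol_iso[OF mu_hom mumu] .
  define r1 where "r1 = (\<lambda>b. if phi (F b) then b \<otimes>\<^bsub>B\<^esub> z1 else b)"
  have r1c: "\<And>b. b \<in> carrier B \<Longrightarrow> r1 b \<in> carrier B" unfolding r1_def using z1 by simp
  have r1e: "\<And>b. b \<in> carrier B \<Longrightarrow> mu (\<pi>1 b) = \<pi>1 (r1 b)"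
    unfolding r1_def mu_def F_def using pm z1(1) pz1 by simp
  have r1_hom: "r1 \<in> hom B B"
    using hom_via[OF B.is_monoid ph pinj mu_hom] r1c r1e by blast
  have r1r1: "\<And>b. b \<in> carrier B \<Longrightarrow> r1 (r1 b) = b"
  proof -
    fix b assume b: "b \<in> carrier B"
    have "\<pi>1 (r1 (r1 b)) = \<pi>1 b" using r1e[OF r1c[OF b]] r1e[OF b] mumu pc b by metis
    thus "r1 (r1 b) = b" using b r1c by (simp add: peq)
  qed
  have r1_iso: "r1 \<in> iso B B" using invol_iso[OF r1_hom r1r1] .
  have r1t: "\<forall>t\<in>carrier B. t \<otimes>\<^bsub>B\<^esub> t \<noteq> \<one>\<^bsub>B\<^esub> \<longrightarrow> r1 t = t \<otimes>\<^bsub>B\<^esub> z1"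
    unfolding r1_def using phit by simp
  have r1z: "r1 z1 = z1" unfolding r1_def using z1(2) G1_D4(5) by simp
  show ?thesis
    using z1(1) z1z1 z11 zsq nrm mu_iso r1_iso r1e r1t r1z by blast
qed



lemma A2_side:
  fixes A2 :: "('a2, 'x2) monoid_scheme" and B :: "('b, 'x3) monoid_scheme"
  assumes gA2: "group A2" and gB: "group B" and ph: "\<pi>2 \<in> hom B A2" and pinj: "inj_on \<pi>2 (carrier B)"
    and Biso: "B \<cong> B0" and deg: "card (rcosets\<^bsub>A2\<^esub> (\<pi>2 ` carrier B)) = 2"
    and z1: "z1 \<in> carrier B" and z1z1: "z1 \<otimes>\<^bsub>B\<^esub> z1 = \<one>\<^bsub>B\<^esub>" and z11: "z1 \<noteq> \<one>\<^bsub>B\<^esub>"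
    and zsq: "\<forall>t\<in>carrier B. z1 \<noteq> t \<otimes>\<^bsub>B\<^esub> t"
    and noncent: "\<exists>y\<in>carrier A2. y \<otimes>\<^bsub>A2\<^esub> \<pi>2 z1 \<noteq> \<pi>2 z1 \<otimes>\<^bsub>A2\<^esub> y"
  shows "\<exists>t\<in>carrier B. t \<otimes>\<^bsub>B\<^esub> t \<noteq> \<one>\<^bsub>B\<^esub> \<and>
     (\<forall>u v. (u = t \<or> u = t \<otimes>\<^bsub>B\<^esub> t \<otimes>\<^bsub>B\<^esub> t) \<longrightarrow> (v = z1 \<or> v = t \<otimes>\<^bsub>B\<^esub> t \<otimes>\<^bsub>B\<^esub> z1) \<longrightarrow>
        (\<exists>a2\<in>iso A2 A2. a2 (\<pi>2 t) = \<pi>2 u \<and> a2 (\<pi>2 z1) = \<pi>2 v))"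
proof -
  interpret A2: group A2 by (rule gA2)
  interpret B: group B by (rule gB)
  note BS = B_structure[OF gB Biso]
  have pm: "\<And>x y. x \<in> carrier B \<Longrightarrow> y \<in> carrier B \<Longrightarrow> \<pi>2 (x \<otimes>\<^bsub>B\<^esub> y) = \<pi>2 x \<otimes>\<^bsub>A2\<^esub> \<pi>2 y"
    using hom_mult[OF ph] .
  have pc: "\<And>x. x \<in> carrier B \<Longrightarrow> \<pi>2 x \<in> carrier A2" using ph by (auto simp: hom_def)
  have p1: "\<pi>2 \<one>\<^bsub>B\<^esub> = \<one>\<^bsub>A2\<^esub>" using hom_one[OF ph gB gA2] .
  have peq: "\<And>x y. x \<in> carrier B \<Longrightarrow> y \<in> carrier B \<Longrightarrow> \<pi>2 x = \<pi>2 y \<longleftrightarrow> x = y"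
    using pinj by (meson inj_on_eq_iff)
  define P2 where "P2 = \<pi>2 ` carrier B"
  have Psub: "subgroup P2 A2" unfolding P2_def
    using group_hom.img_is_subgroup[of B A2 \<pi>2] gA2 gB ph by (simp add: group_hom_def group_hom_axioms_def)
  obtain g where g: "g \<in> carrier A2" "g \<notin> P2" and dec: "\<forall>x\<in>carrier A2. x \<in> P2 \<or> (\<exists>p\<in>P2. x = p \<otimes>\<^bsub>A2\<^esub> g)"
    using index2[OF gA2 Psub] deg unfolding P2_def by blast
  have comm: "\<And>x y. x \<in> P2 \<Longrightarrow> y \<in> P2 \<Longrightarrow> x \<otimes>\<^bsub>A2\<^esub> y = y \<otimes>\<^bsub>A2\<^esub> x"
  proof -
    fix x y assume "x \<in> P2" "y \<in> P2"
    then obtain a b where ab: "a \<in> carrier B" "b \<in> carrier B" "x = \<pi>2 a" "y = \<pi>2 b" unfolding P2_def by blast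
    have "\<pi>2 (a \<otimes>\<^bsub>B\<^esub> b) = \<pi>2 (b \<otimes>\<^bsub>B\<^esub> a)" using BS(2) ab by metis
    thus "x \<otimes>\<^bsub>A2\<^esub> y = y \<otimes>\<^bsub>A2\<^esub> x" using pm ab by simp
  qed
  interpret I: idx2 A2 P2 g
    using gA2 Psub comm g dec by (simp add: idx2_def idx2_axioms_def)
  define Z where "Z = \<pi>2 z1"
  have ZP: "Z \<in> P2" unfolding Z_def P2_def using z1 by simp
  have ZA: "Z \<in> carrier A2" unfolding Z_def using pc z1 by simp
  have gZ: "g \<otimes>\<^bsub>A2\<^esub> Z \<noteq> Z \<otimes>\<^bsub>A2\<^esub> g"
  proof
    assume e: "g \<otimes>\<^bsub>A2\<^esub> Z = Z \<otimes>\<^bsub>A2\<^esub> g"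
    have "\<forall>y\<in>carrier A2. y \<otimes>\<^bsub>A2\<^esub> Z = Z \<otimes>\<^bsub>A2\<^esub> y"
    proof
      fix y assume y: "y \<in> carrier A2"
      show "y \<otimes>\<^bsub>A2\<^esub> Z = Z \<otimes>\<^bsub>A2\<^esub> y"
      proof (cases "y \<in> P2")
        case True thus ?thesis using comm ZP by simp
      next
        case False
        then obtain p where p: "p \<in> P2" "y = p \<otimes>\<^bsub>A2\<^esub> g" using dec y by blast
        have pA: "p \<in> carrier A2" using I.Pc p(1) .
        have "y \<otimes>\<^bsub>A2\<^esub> Z = p \<otimes>\<^bsub>A2\<^esub> (g \<otimes>\<^bsub>A2\<^esub> Z)" using p pA g ZA by (simp add: A2.m_assoc)
        also have "\<dots> = (p \<otimes>\<^bsub>A2\<^esub> Z) \<otimes>\<^bsub>A2\<^esub> g" using e pA g ZA by (simp add: A2.m_assoc)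
        also have "\<dots> = (Z \<otimes>\<^bsub>A2\<^esub> p) \<otimes>\<^bsub>A2\<^esub> g" using comm[OF p(1) ZP] by simp
        also have "\<dots> = Z \<otimes>\<^bsub>A2\<^esub> y" using p pA g ZA by (simp add: A2.m_assoc)
        finally show ?thesis .
      qed
    qed
    thus False using noncent unfolding Z_def by blast
  qed
  have kapZ: "I.kap Z \<noteq> Z"
  proof
    assume "I.kap Z = Z"
    hence "g \<otimes>\<^bsub>A2\<^esub> Z = Z \<otimes>\<^bsub>A2\<^esub> g" using I.kap_g[OF ZA] by simp
    thus False using gZ by simp
  qed
  define c where "c = (\<lambda>b. inv_into (carrier B) \<pi>2 (I.kap (\<pi>2 b)))"
  have cB: "\<And>b. b \<in> carrier B \<Longrightarrow> c b \<in> carrier B \<and> \<pi>2 (c b) = I.kap (\<pi>2 b)"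
  proof -
    fix b assume b: "b \<in> carrier B"
    have "I.kap (\<pi>2 b) \<in> \<pi>2 ` carrier B" using I.kapP b unfolding P2_def by simp
    thus "c b \<in> carrier B \<and> \<pi>2 (c b) = I.kap (\<pi>2 b)" unfolding c_def by (simp add: inv_into_into f_inv_into_f)
  qed
  have kap_hom: "I.kap \<in> hom A2 A2" using I.kap_iso by (simp add: iso_iff)
  have c_hom: "c \<in> hom B B" using hom_via[OF B.is_monoid ph pinj kap_hom] cB by metis
  have cm: "\<And>x y. x \<in> carrier B \<Longrightarrow> y \<in> carrier B \<Longrightarrow> c (x \<otimes>\<^bsub>B\<^esub> y) = c x \<otimes>\<^bsub>B\<^esub> c y" using hom_mult[OF c_hom] .
  have c1: "c \<one>\<^bsub>B\<^esub> = \<one>\<^bsub>B\<^esub>" using hom_one[OF c_hom gB gB] .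
  have cc: "\<And>b. b \<in> carrier B \<Longrightarrow> c (c b) = b"
  proof -
    fix b assume b: "b \<in> carrier B"
    have cb: "c b \<in> carrier B" "\<pi>2 (c b) = I.kap (\<pi>2 b)" using cB[OF b] by auto
    have "\<pi>2 (c (c b)) = I.kap (\<pi>2 (c b))" using cB[OF cb(1)] by simp
    also have "\<dots> = I.kap (I.kap (\<pi>2 b))" using cb(2) by simp
    also have "\<dots> = \<pi>2 b" using I.kap_kap[of "\<pi>2 b"] b unfolding P2_def by simp
    finally have X: "\<pi>2 (c (c b)) = \<pi>2 b" .
    have ccB: "c (c b) \<in> carrier B" using cB[OF cb(1)] by blast
    show "c (c b) = b" using X peq[OF ccB b] by blast
  qed
  have cBc: "\<And>b. b \<in> carrier B \<Longrightarrow> c b \<in> carrier B" using cB by blast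
  obtain t0 where t0: "t0 \<in> carrier B" "t0 \<otimes>\<^bsub>B\<^esub> t0 \<noteq> \<one>\<^bsub>B\<^esub>" using BS(4) by blast
  have zt0: "z1 \<noteq> t0 \<otimes>\<^bsub>B\<^esub> t0" using zsq t0 by blast
  note J0 = B_JK(1)[OF gB Biso t0(1) z1 t0(2) z1z1 z11 zt0, unfolded J0_def]
  note K0 = B_JK(2)[OF gB Biso t0(1) z1 t0(2) z1z1 z11 zt0, unfolded K0_def]
  have ct0sq: "c t0 \<otimes>\<^bsub>B\<^esub> c t0 \<noteq> \<one>\<^bsub>B\<^esub>"
  proof
    assume "c t0 \<otimes>\<^bsub>B\<^esub> c t0 = \<one>\<^bsub>B\<^esub>"
    hence "c (c t0 \<otimes>\<^bsub>B\<^esub> c t0) = \<one>\<^bsub>B\<^esub>" using c1 by simp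
    hence "t0 \<otimes>\<^bsub>B\<^esub> t0 = \<one>\<^bsub>B\<^esub>" using cm cc cBc t0(1) by simp
    thus False using t0 by simp
  qed
  have cs: "c (t0 \<otimes>\<^bsub>B\<^esub> t0) = t0 \<otimes>\<^bsub>B\<^esub> t0"
    using cm[OF t0(1) t0(1)] BS(3) cBc[OF t0(1)] t0 ct0sq by metis
  have cz: "c z1 = t0 \<otimes>\<^bsub>B\<^esub> t0 \<otimes>\<^bsub>B\<^esub> z1"
  proof -
    have sq: "c z1 \<otimes>\<^bsub>B\<^esub> c z1 = \<one>\<^bsub>B\<^esub>" using cm[OF z1 z1] z1z1 c1 by simp
    have n1: "c z1 \<noteq> \<one>\<^bsub>B\<^esub>" using cc[OF z1] c1 z11 by auto
    have nz: "c z1 \<noteq> z1" using cB[OF z1] kapZ unfolding Z_def by auto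
    have ns: "c z1 \<noteq> t0 \<otimes>\<^bsub>B\<^esub> t0" using cc[OF z1] cs zt0 by auto
    show ?thesis using K0[OF cBc[OF z1]] sq n1 nz ns by blast
  qed
  have "\<exists>t\<in>carrier B. t \<otimes>\<^bsub>B\<^esub> t \<noteq> \<one>\<^bsub>B\<^esub> \<and> c t = t \<and> t \<otimes>\<^bsub>B\<^esub> t = t0 \<otimes>\<^bsub>B\<^esub> t0"
  proof -
    have "c t0 = t0 \<or> c t0 = t0 \<otimes>\<^bsub>B\<^esub> t0 \<otimes>\<^bsub>B\<^esub> t0 \<or> c t0 = t0 \<otimes>\<^bsub>B\<^esub> z1 \<or> c t0 = t0 \<otimes>\<^bsub>B\<^esub> t0 \<otimes>\<^bsub>B\<^esub> t0 \<otimes>\<^bsub>B\<^esub> z1"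
      using K0[OF cBc[OF t0(1)]] ct0sq by blast
    thus ?thesis
    proof (elim disjE)
      assume "c t0 = t0" thus ?thesis using t0 by blast
    next
      assume e: "c t0 = t0 \<otimes>\<^bsub>B\<^esub> t0 \<otimes>\<^bsub>B\<^esub> t0"
      have "c (t0 \<otimes>\<^bsub>B\<^esub> z1) = t0 \<otimes>\<^bsub>B\<^esub> z1" using cm[OF t0(1) z1] e cz J0 by simp
      moreover have "t0 \<otimes>\<^bsub>B\<^esub> z1 \<otimes>\<^bsub>B\<^esub> (t0 \<otimes>\<^bsub>B\<^esub> z1) = t0 \<otimes>\<^bsub>B\<^esub> t0" using J0 by simp
      ultimately show ?thesis using t0 z1 by (intro bexI[of _ "t0 \<otimes>\<^bsub>B\<^esub> z1"]) auto
    next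
      assume e: "c t0 = t0 \<otimes>\<^bsub>B\<^esub> z1"
      have "t0 = c (t0 \<otimes>\<^bsub>B\<^esub> z1)" using cc[OF t0(1)] e by simp
      also have "\<dots> = t0 \<otimes>\<^bsub>B\<^esub> t0 \<otimes>\<^bsub>B\<^esub> t0" using cm[OF t0(1) z1] e cz J0 by simp
      finally show ?thesis using J0 by simp
    next
      assume e: "c t0 = t0 \<otimes>\<^bsub>B\<^esub> t0 \<otimes>\<^bsub>B\<^esub> t0 \<otimes>\<^bsub>B\<^esub> z1"
      have "t0 = c (t0 \<otimes>\<^bsub>B\<^esub> t0 \<otimes>\<^bsub>B\<^esub> t0 \<otimes>\<^bsub>B\<^esub> z1)" using cc[OF t0(1)] e by simp
      also have "\<dots> = t0 \<otimes>\<^bsub>B\<^esub> t0 \<otimes>\<^bsub>B\<^esub> t0" using cm t0(1) z1 e cz J0 by simp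
      finally show ?thesis using J0 by simp
    qed
  qed
  then obtain t where t: "t \<in> carrier B" "t \<otimes>\<^bsub>B\<^esub> t \<noteq> \<one>\<^bsub>B\<^esub>" "c t = t" "t \<otimes>\<^bsub>B\<^esub> t = t0 \<otimes>\<^bsub>B\<^esub> t0" by blast
  have czt: "c z1 = t \<otimes>\<^bsub>B\<^esub> t \<otimes>\<^bsub>B\<^esub> z1" using cz t(4) by simp
  have zt: "z1 \<noteq> t \<otimes>\<^bsub>B\<^esub> t" using zsq t by blast
  note Jt = B_JK(1)[OF gB Biso t(1) z1 t(2) z1z1 z11 zt, unfolded J0_def]
  define T where "T = \<pi>2 t"
  have TP: "T \<in> P2" unfolding T_def P2_def using t by simp
  have kT: "I.kap T = T" unfolding T_def using cB[OF t(1)] t(3) by simp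
  have kZ: "I.kap Z = \<pi>2 (t \<otimes>\<^bsub>B\<^esub> t \<otimes>\<^bsub>B\<^esub> z1)" unfolding Z_def using cB[OF z1] czt by simp
  have t3B: "t \<otimes>\<^bsub>B\<^esub> t \<otimes>\<^bsub>B\<^esub> t \<in> carrier B" using t(1) by simp
  have szB: "t \<otimes>\<^bsub>B\<^esub> t \<otimes>\<^bsub>B\<^esub> z1 \<in> carrier B" using t(1) z1 by simp
  have oT: "I.omg T = \<pi>2 (t \<otimes>\<^bsub>B\<^esub> t \<otimes>\<^bsub>B\<^esub> t)"
  proof -
    have "t \<otimes>\<^bsub>B\<^esub> t \<otimes>\<^bsub>B\<^esub> t \<otimes>\<^bsub>B\<^esub> t = \<one>\<^bsub>B\<^esub>" using Jt BS(2) t3B t(1) by metis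
    hence "\<pi>2 (t \<otimes>\<^bsub>B\<^esub> t \<otimes>\<^bsub>B\<^esub> t) \<otimes>\<^bsub>A2\<^esub> T = \<one>\<^bsub>A2\<^esub>" unfolding T_def using pm[OF t3B t(1)] p1 by simp
    hence "inv\<^bsub>A2\<^esub> T = \<pi>2 (t \<otimes>\<^bsub>B\<^esub> t \<otimes>\<^bsub>B\<^esub> t)" using A2.inv_equality pc t3B t(1) unfolding T_def by blast
    thus ?thesis using I.omg1[OF TP] by simp
  qed
  have oZ: "I.omg Z = Z"
  proof -
    have "Z \<otimes>\<^bsub>A2\<^esub> Z = \<one>\<^bsub>A2\<^esub>" unfolding Z_def using pm[OF z1 z1] z1z1 p1 by simp
    hence "inv\<^bsub>A2\<^esub> Z = Z" using A2.inv_equality ZA by blast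
    thus ?thesis using I.omg1[OF ZP] by simp
  qed
  have osZ: "I.omg (\<pi>2 (t \<otimes>\<^bsub>B\<^esub> t \<otimes>\<^bsub>B\<^esub> z1)) = \<pi>2 (t \<otimes>\<^bsub>B\<^esub> t \<otimes>\<^bsub>B\<^esub> z1)"
  proof -
    have "\<pi>2 (t \<otimes>\<^bsub>B\<^esub> t \<otimes>\<^bsub>B\<^esub> z1) \<otimes>\<^bsub>A2\<^esub> \<pi>2 (t \<otimes>\<^bsub>B\<^esub> t \<otimes>\<^bsub>B\<^esub> z1) = \<one>\<^bsub>A2\<^esub>"
      using pm[OF szB szB] Jt p1 by simp
    hence "inv\<^bsub>A2\<^esub> \<pi>2 (t \<otimes>\<^bsub>B\<^esub> t \<otimes>\<^bsub>B\<^esub> z1) = \<pi>2 (t \<otimes>\<^bsub>B\<^esub> t \<otimes>\<^bsub>B\<^esub> z1)" using A2.inv_equality pc szB by blast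
    moreover have "\<pi>2 (t \<otimes>\<^bsub>B\<^esub> t \<otimes>\<^bsub>B\<^esub> z1) \<in> P2" unfolding P2_def using szB by simp
    ultimately show ?thesis using I.omg1 by simp
  qed
  show ?thesis
  proof (intro bexI[OF _ t(1)] conjI t(2) allI impI)
    fix u v assume u: "u = t \<or> u = t \<otimes>\<^bsub>B\<^esub> t \<otimes>\<^bsub>B\<^esub> t" and v: "v = z1 \<or> v = t \<otimes>\<^bsub>B\<^esub> t \<otimes>\<^bsub>B\<^esub> z1"
    show "\<exists>a2\<in>iso A2 A2. a2 (\<pi>2 t) = \<pi>2 u \<and> a2 (\<pi>2 z1) = \<pi>2 v"
      using u v
    proof (elim disjE)
      assume "u = t" "v = z1" thus ?thesis using iso_set_refl[of A2] by (intro bexI[of _ "\<lambda>x. x"]) auto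
    next
      assume "u = t" "v = t \<otimes>\<^bsub>B\<^esub> t \<otimes>\<^bsub>B\<^esub> z1" thus ?thesis using I.kap_iso kT kZ unfolding T_def Z_def by blast
    next
      assume "u = t \<otimes>\<^bsub>B\<^esub> t \<otimes>\<^bsub>B\<^esub> t" "v = z1" thus ?thesis using I.omg_iso oT oZ unfolding T_def Z_def by blast
    next
      assume e: "u = t \<otimes>\<^bsub>B\<^esub> t \<otimes>\<^bsub>B\<^esub> t" "v = t \<otimes>\<^bsub>B\<^esub> t \<otimes>\<^bsub>B\<^esub> z1"
      have "(I.omg \<circ> I.kap) \<in> iso A2 A2" using iso_set_trans[OF I.kap_iso I.omg_iso] .
      moreover have "(I.omg \<circ> I.kap) (\<pi>2 t) = \<pi>2 u" using kT oT e unfolding T_def by simp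
      moreover have "(I.omg \<circ> I.kap) (\<pi>2 z1) = \<pi>2 v" using kZ osZ e unfolding Z_def by simp
      ultimately show ?thesis by blast
    qed
  qed
qed




theorem mainTheorem19:
  fixes A1 :: "('a1, 'x1) monoid_scheme" and A2 :: "('a2, 'x2) monoid_scheme"
    and B :: "('b, 'x3) monoid_scheme" and \<pi>1 :: "'b \<Rightarrow> 'a1" and \<pi>2 :: "'b \<Rightarrow> 'a2"
    and C1 :: "('c1, 'y1) monoid_scheme" and C2 :: "('c2, 'y2) monoid_scheme"
    and D :: "('d, 'y3) monoid_scheme" and \<rho>1 :: "'d \<Rightarrow> 'c1" and \<rho>2 :: "'d \<Rightarrow> 'c2"
  assumes "finite_amalgam A1 A2 B \<pi>1 \<pi>2"
    and "primitive_amalgam A1 A2 B \<pi>1 \<pi>2"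
    and "amalgam_degree A1 A2 B \<pi>1 \<pi>2 5 2"
    and "A1 \<cong> Frob20 \<times>\<times> C 2"
    and "B \<cong> C 4 \<times>\<times> C 2"
    and "A2 \<cong> N16 \<or> A2 \<cong> M16"
    and "amalgam C1 C2 D \<rho>1 \<rho>2"
    and "same_type A1 A2 B \<pi>1 \<pi>2 C1 C2 D \<rho>1 \<rho>2"
  shows "isomorphic_amalgams A1 A2 B \<pi>1 \<pi>2 C1 C2 D \<rho>1 \<rho>2"
proof -
  have gA1: "group A1" and gA2: "group A2" and gB: "group B"
    and ph1: "\<pi>1 \<in> hom B A1" and pi1: "inj_on \<pi>1 (carrier B)"
    and ph2: "\<pi>2 \<in> hom B A2" and pi2: "inj_on \<pi>2 (carrier B)"
    using assms(1) unfolding finite_amalgam_def amalgam_def monomorphism_def by blast+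
  have gC1: "group C1" and gC2: "group C2" and gD: "group D"
    and rh1: "\<rho>1 \<in> hom D C1" and ri1: "inj_on \<rho>1 (carrier D)"
    and rh2: "\<rho>2 \<in> hom D C2" and ri2: "inj_on \<rho>2 (carrier D)"
    using assms(7) unfolding amalgam_def monomorphism_def by blast+
  have "\<exists>\<alpha> \<beta> \<gamma>. \<alpha> \<in> iso A1 C1 \<and> \<beta> \<in> iso A2 C2 \<and> \<gamma> \<in> iso B D \<and>
        \<alpha> ` (\<pi>1 ` carrier B) = \<rho>1 ` carrier D \<and>
        \<beta> ` (\<pi>2 ` carrier B) = \<rho>2 ` carrier D" using assms(8) unfolding same_type_def .
  then obtain \<alpha> \<beta> \<gamma> where H: "\<alpha> \<in> iso A1 C1 \<and> \<beta> \<in> iso A2 C2 \<and> \<gamma> \<in> iso B D \<and>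
        \<alpha> ` (\<pi>1 ` carrier B) = \<rho>1 ` carrier D \<and>
        \<beta> ` (\<pi>2 ` carrier B) = \<rho>2 ` carrier D" by (elim exE)
  have al: "\<alpha> \<in> iso A1 C1" using H by (rule conjunct1)
  have be: "\<beta> \<in> iso A2 C2" using H[THEN conjunct2] by (rule conjunct1)
  have img1: "\<alpha> ` (\<pi>1 ` carrier B) = \<rho>1 ` carrier D" using H[THEN conjunct2, THEN conjunct2, THEN conjunct2] by (rule conjunct1)
  have img2: "\<beta> ` (\<pi>2 ` carrier B) = \<rho>2 ` carrier D" using H[THEN conjunct2, THEN conjunct2, THEN conjunct2] by (rule conjunct2)
  have deg: "card (rcosets\<^bsub>A2\<^esub> (\<pi>2 ` carrier B)) = 2" using assms(3) unfolding amalgam_degree_def by blast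
  have Biso: "B \<cong> B0" using assms(5) .
  interpret B: group B by (rule gB)
  interpret A2: group A2 by (rule gA2)
  note BS = B_structure[OF gB Biso]
  obtain f1 where f1: "f1 \<in> iso A1 G1" using assms(4) unfolding is_iso_def by blast
  obtain z1 mu r1 where z1: "z1 \<in> carrier B" and z1z1: "z1 \<otimes>\<^bsub>B\<^esub> z1 = \<one>\<^bsub>B\<^esub>" and z11: "z1 \<noteq> \<one>\<^bsub>B\<^esub>"
    and zsq: "\<forall>t\<in>carrier B. z1 \<noteq> t \<otimes>\<^bsub>B\<^esub> t" and nrm1: "{\<one>\<^bsub>A1\<^esub>, \<pi>1 z1} \<lhd> A1"
    and mu: "mu \<in> iso A1 A1" and r1: "r1 \<in> iso B B" and r1e: "\<forall>b\<in>carrier B. mu (\<pi>1 b) = \<pi>1 (r1 b)"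
    and r1t: "\<forall>t\<in>carrier B. t \<otimes>\<^bsub>B\<^esub> t \<noteq> \<one>\<^bsub>B\<^esub> \<longrightarrow> r1 t = t \<otimes>\<^bsub>B\<^esub> z1" and r1z: "r1 z1 = z1"
    using A1_side[OF gA1 gB ph1 pi1 f1 Biso] by blast
  have pm2: "\<And>x y. x \<in> carrier B \<Longrightarrow> y \<in> carrier B \<Longrightarrow> \<pi>2 (x \<otimes>\<^bsub>B\<^esub> y) = \<pi>2 x \<otimes>\<^bsub>A2\<^esub> \<pi>2 y"
    using hom_mult[OF ph2] .
  have noncent: "\<exists>y\<in>carrier A2. y \<otimes>\<^bsub>A2\<^esub> \<pi>2 z1 \<noteq> \<pi>2 z1 \<otimes>\<^bsub>A2\<^esub> y"
  proof (rule ccontr)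
    assume "\<not> ?thesis"
    hence cen: "\<forall>y\<in>carrier A2. y \<otimes>\<^bsub>A2\<^esub> \<pi>2 z1 = \<pi>2 z1 \<otimes>\<^bsub>A2\<^esub> y" by blast
    have Zc: "\<pi>2 z1 \<in> carrier A2" using ph2 z1 by (auto simp: hom_def)
    have ZZ: "\<pi>2 z1 \<otimes>\<^bsub>A2\<^esub> \<pi>2 z1 = \<one>\<^bsub>A2\<^esub>" using pm2[OF z1 z1] z1z1 hom_one[OF ph2 gB gA2] by simp
    have n2: "{\<one>\<^bsub>A2\<^esub>, \<pi>2 z1} \<lhd> A2" using normal2[OF gA2 Zc ZZ cen] .
    have sK: "subgroup {\<one>\<^bsub>B\<^esub>, z1} B" using sub2[OF gB z1 z1z1] .
    have i1: "\<pi>1 ` {\<one>\<^bsub>B\<^esub>, z1} = {\<one>\<^bsub>A1\<^esub>, \<pi>1 z1}" using hom_one[OF ph1 gB gA1] by simp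
    have i2: "\<pi>2 ` {\<one>\<^bsub>B\<^esub>, z1} = {\<one>\<^bsub>A2\<^esub>, \<pi>2 z1}" using hom_one[OF ph2 gB gA2] by simp
    have "{\<one>\<^bsub>B\<^esub>, z1} = {\<one>\<^bsub>B\<^esub>}"
      using assms(2) sK nrm1 n2 i1 i2 unfolding primitive_amalgam_def by metis
    thus False using z11 by auto
  qed
  obtain t where t: "t \<in> carrier B" "t \<otimes>\<^bsub>B\<^esub> t \<noteq> \<one>\<^bsub>B\<^esub>"
    and real: "\<forall>u v. (u = t \<or> u = t \<otimes>\<^bsub>B\<^esub> t \<otimes>\<^bsub>B\<^esub> t) \<longrightarrow> (v = z1 \<or> v = t \<otimes>\<^bsub>B\<^esub> t \<otimes>\<^bsub>B\<^esub> z1) \<longrightarrow>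
        (\<exists>a2\<in>iso A2 A2. a2 (\<pi>2 t) = \<pi>2 u \<and> a2 (\<pi>2 z1) = \<pi>2 v)"
    using A2_side[OF gA2 gB ph2 pi2 Biso deg z1 z1z1 z11 zsq noncent] by blast
  have zt: "z1 \<noteq> t \<otimes>\<^bsub>B\<^esub> t" using zsq t by blast
  note Jt = B_JK(1)[OF gB Biso t(1) z1 t(2) z1z1 z11 zt, unfolded J0_def]
  note Kt = B_JK(2)[OF gB Biso t(1) z1 t(2) z1z1 z11 zt, unfolded K0_def]
  define \<sigma>1 where "\<sigma>1 = (\<lambda>b. inv_into (carrier D) \<rho>1 (\<alpha> (\<pi>1 b)))"
  define \<sigma>2 where "\<sigma>2 = (\<lambda>b. inv_into (carrier D) \<rho>2 (\<beta> (\<pi>2 b)))"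
  have s1: "\<sigma>1 \<in> iso B D" and s1e: "\<forall>b\<in>carrier B. \<rho>1 (\<sigma>1 b) = \<alpha> (\<pi>1 b)"
    unfolding \<sigma>1_def using sigma_iso[OF gB gA1 gC1 gD rh1 ri1 al ph1 pi1 img1] by auto
  have s2: "\<sigma>2 \<in> iso B D" and s2e: "\<forall>b\<in>carrier B. \<rho>2 (\<sigma>2 b) = \<beta> (\<pi>2 b)"
    unfolding \<sigma>2_def using sigma_iso[OF gB gA2 gC2 gD rh2 ri2 be ph2 pi2 img2] by auto
  define \<theta> where "\<theta> = inv_into (carrier B) \<sigma>2 \<circ> \<sigma>1"
  have th: "\<theta> \<in> iso B B" unfolding \<theta>_def using iso_set_trans[OF s1 B.iso_set_sym[OF s2]] .
  have the: "\<forall>b\<in>carrier B. \<theta> b \<in> carrier B \<and> \<sigma>2 (\<theta> b) = \<sigma>1 b"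
  proof
    fix b assume b: "b \<in> carrier B"
    have "\<sigma>1 b \<in> \<sigma>2 ` carrier B" using s1 s2 b by (auto simp: iso_iff hom_def)
    thus "\<theta> b \<in> carrier B \<and> \<sigma>2 (\<theta> b) = \<sigma>1 b" unfolding \<theta>_def by (simp add: inv_into_into f_inv_into_f)
  qed
  have thh: "\<theta> \<in> hom B B" and thi: "inj_on \<theta> (carrier B)" using th by (auto simp: iso_iff)
  have thmul: "\<And>x y. x \<in> carrier B \<Longrightarrow> y \<in> carrier B \<Longrightarrow> \<theta> (x \<otimes>\<^bsub>B\<^esub> y) = \<theta> x \<otimes>\<^bsub>B\<^esub> \<theta> y" using hom_mult[OF thh] .
  have th1: "\<theta> \<one>\<^bsub>B\<^esub> = \<one>\<^bsub>B\<^esub>" using hom_one[OF thh gB gB] .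
  have thc: "\<And>x. x \<in> carrier B \<Longrightarrow> \<theta> x \<in> carrier B" using the by blast
  have theq: "\<And>x y. x \<in> carrier B \<Longrightarrow> y \<in> carrier B \<Longrightarrow> \<theta> x = \<theta> y \<longleftrightarrow> x = y"
    using thi by (meson inj_on_eq_iff)
  have tht_sq: "\<theta> t \<otimes>\<^bsub>B\<^esub> \<theta> t \<noteq> \<one>\<^bsub>B\<^esub>" using thmul[OF t(1) t(1)] th1 theq t by (metis B.m_closed B.one_closed)
  have ths: "\<theta> (t \<otimes>\<^bsub>B\<^esub> t) = t \<otimes>\<^bsub>B\<^esub> t" using thmul[OF t(1) t(1)] BS(3) thc[OF t(1)] t tht_sq by metis
  have tht: "\<theta> t = t \<or> \<theta> t = t \<otimes>\<^bsub>B\<^esub> t \<otimes>\<^bsub>B\<^esub> t \<or> \<theta> t = t \<otimes>\<^bsub>B\<^esub> z1 \<or> \<theta> t = t \<otimes>\<^bsub>B\<^esub> t \<otimes>\<^bsub>B\<^esub> t \<otimes>\<^bsub>B\<^esub> z1"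
    using Kt[OF thc[OF t(1)]] tht_sq by blast
  have thz: "\<theta> z1 = z1 \<or> \<theta> z1 = t \<otimes>\<^bsub>B\<^esub> t \<otimes>\<^bsub>B\<^esub> z1"
  proof -
    have sq: "\<theta> z1 \<otimes>\<^bsub>B\<^esub> \<theta> z1 = \<one>\<^bsub>B\<^esub>" using thmul[OF z1 z1] z1z1 th1 by simp
    have n1: "\<theta> z1 \<noteq> \<one>\<^bsub>B\<^esub>" using theq[OF z1 B.one_closed] th1 z11 by simp
    have ns: "\<theta> z1 \<noteq> t \<otimes>\<^bsub>B\<^esub> t" using theq[OF z1] ths zt t(1) by (metis B.m_closed)
    show ?thesis using Kt[OF thc[OF z1]] sq n1 ns by blast
  qed
  have "\<exists>a1 r. a1 \<in> iso A1 A1 \<and> r \<in> iso B B \<and> (\<forall>b\<in>carrier B. a1 (\<pi>1 b) = \<pi>1 (r b))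
      \<and> (\<theta> (r t) = t \<or> \<theta> (r t) = t \<otimes>\<^bsub>B\<^esub> t \<otimes>\<^bsub>B\<^esub> t) \<and> \<theta> (r z1) = \<theta> z1"
  proof (cases "\<theta> t = t \<or> \<theta> t = t \<otimes>\<^bsub>B\<^esub> t \<otimes>\<^bsub>B\<^esub> t")
    case True
    thus ?thesis using iso_set_refl[of A1] iso_set_refl[of B] by (intro exI[of _ "\<lambda>x. x"]) auto
  next
    case False
    hence F: "\<theta> t = t \<otimes>\<^bsub>B\<^esub> z1 \<or> \<theta> t = t \<otimes>\<^bsub>B\<^esub> t \<otimes>\<^bsub>B\<^esub> t \<otimes>\<^bsub>B\<^esub> z1" using tht by blast
    have "\<theta> (r1 t) = \<theta> t \<otimes>\<^bsub>B\<^esub> \<theta> z1" using r1t t thmul[OF t(1) z1] by simp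
    hence "\<theta> (r1 t) = t \<or> \<theta> (r1 t) = t \<otimes>\<^bsub>B\<^esub> t \<otimes>\<^bsub>B\<^esub> t" using F thz Jt by auto
    thus ?thesis using mu r1 r1e r1z by (intro exI[of _ mu] exI[of _ r1] conjI) auto
  qed
  then obtain a1 r where a1: "a1 \<in> iso A1 A1" and r: "r \<in> iso B B" and a1e: "\<forall>b\<in>carrier B. a1 (\<pi>1 b) = \<pi>1 (r b)"
    and rt: "\<theta> (r t) = t \<or> \<theta> (r t) = t \<otimes>\<^bsub>B\<^esub> t \<otimes>\<^bsub>B\<^esub> t" and rz: "\<theta> (r z1) = \<theta> z1" by blast
  obtain a2 where a2: "a2 \<in> iso A2 A2" and a2t: "a2 (\<pi>2 t) = \<pi>2 (\<theta> (r t))" and a2z: "a2 (\<pi>2 z1) = \<pi>2 (\<theta> (r z1))"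
    using real rt thz rz by metis
  have a2e: "\<forall>b\<in>carrier B. a2 (\<pi>2 b) = \<pi>2 (\<theta> (r b))"
  proof
    fix x assume x: "x \<in> carrier B"
    have rh: "r \<in> hom B B" using r by (simp add: iso_iff)
    have a2h: "a2 \<in> hom A2 A2" using a2 by (simp add: iso_iff)
    have f: "a2 \<circ> \<pi>2 \<in> hom B A2" using hom_compose[OF ph2 a2h] .
    have f': "\<pi>2 \<circ> (\<theta> \<circ> r) \<in> hom B A2" using hom_compose[OF hom_compose[OF rh thh] ph2] .
    have dis: "x = \<one>\<^bsub>B\<^esub> \<or> x = t \<or> x = t \<otimes>\<^bsub>B\<^esub> t \<or> x = t \<otimes>\<^bsub>B\<^esub> t \<otimes>\<^bsub>B\<^esub> t
      \<or> x = z1 \<or> x = t \<otimes>\<^bsub>B\<^esub> z1 \<or> x = t \<otimes>\<^bsub>B\<^esub> t \<otimes>\<^bsub>B\<^esub> z1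
      \<or> x = t \<otimes>\<^bsub>B\<^esub> t \<otimes>\<^bsub>B\<^esub> t \<otimes>\<^bsub>B\<^esub> z1" using Kt[OF x] by blast
    have "(a2 \<circ> \<pi>2) x = (\<pi>2 \<circ> (\<theta> \<circ> r)) x"
      by (rule agree[OF gB gA2 f f' t(1) z1 _ _ x dis]) (simp_all add: a2t a2z)
    thus "a2 (\<pi>2 x) = \<pi>2 (\<theta> (r x))" by simp
  qed
  show ?thesis by (rule final_step[OF al be s1 s1e s2e the a1 r a1e a2 a2e])
qed


end
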